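(* Let $V$ be a vector space of odd dimension $n$ over a field $\mathbb{F}$ with an alternating bilinear form $\mathsf{s}$ of maximal rank, $p$ a $1$-dimensional subspace with $p\cap\mathrm{Rad}(V)=0$, and $H$ a complement of $p$ in $V$ containing $\mathrm{Rad}(V)$. Then every triangle of $\Pi(p,H)$ is null-homotopic.
   Context: $\mathrm{Rad}(U)=U\cap U^\perp$; maximal rank means $\dim\mathrm{Rad}(V)\le1$. $\Pi(p,H)$: its objects are the subspaces $U\le H$ with $1\le\dim U\le n-2$ such that $\mathrm{Rad}(V)\not\subseteq U$, $\dim\mathrm{Rad}(U)\le 2$, and either $\mathrm{Rad}(U)=0$ or $\mathrm{Rad}(U)\not\subseteq p^\perp$; the type of $U$ is $\dim U$; points are objects of type 1, lines are objects of type 2. For objects $U\ne W$ with $\dim U<\dim W$, they are incident iff either $\dim W$ is odd and $U\subseteq W$, or $\dim W$ is even, $U\subseteq W$ and $U\cap\mathrm{Rad}(W\cap p^\perp)=0$. A path is a sequence of objects, consecutive ones incident and distinct; a triangle is a closed path $p_1,L_1,p_2,L_2,p_3,L_3,p_1$ with $p_i$ points and $L_i$ lines. A closed path is null-homotopic if it can be reduced to the trivial path by repeatedly inserting or removing closed paths of length $2$ or $3$. *)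

theory Defs
  imports Complex_Main
begin

text \<open>Vector space V = UNIV :: 'v set over the field 'f, with scalar multiplication scale.
  Subspaces are sets U with module.subspace scale U.\<close>

definition alt_bilinear :: "('f::field \<Rightarrow> 'v::ab_group_add \<Rightarrow> 'v) \<Rightarrow> ('v \<Rightarrow> 'v \<Rightarrow> 'f) \<Rightarrow> bool" where
  "alt_bilinear scale s \<longleftrightarrow>
     (\<forall>a x y z. s (scale a x + y) z = a * s x z + s y z) \<and>
     (\<forall>a x y z. s x (scale a y + z) = a * s x y + s x z) \<and>
     (\<forall>x. s x x = 0)"

definition orth :: "('v \<Rightarrow> 'v \<Rightarrow> 'f::zero) \<Rightarrow> 'v set \<Rightarrow> 'v set" where
  "orth s U = {v. \<forall>u\<in>U. s u v = 0}"

definition Rad :: "('v \<Rightarrow> 'v \<Rightarrow> 'f::zero) \<Rightarrow> 'v set \<Rightarrow> 'v set" where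
  "Rad s U = U \<inter> orth s U"

definition is_object :: "('f::field \<Rightarrow> 'v::ab_group_add \<Rightarrow> 'v) \<Rightarrow> ('v \<Rightarrow> 'v \<Rightarrow> 'f) \<Rightarrow> 'v set \<Rightarrow> 'v set \<Rightarrow> 'v set \<Rightarrow> bool" where
  "is_object scale s p H U \<longleftrightarrow>
     module.subspace scale U \<and> U \<subseteq> H \<and>
     1 \<le> vector_space.dim scale U \<and> vector_space.dim scale U + 2 \<le> vector_space.dim scale (UNIV::'v set) \<and>
     \<not> Rad s UNIV \<subseteq> U \<and>
     vector_space.dim scale (Rad s U) \<le> 2 \<and>
     (Rad s U = {0} \<or> \<not> Rad s U \<subseteq> orth s p)"

definition inc_lt :: "('f::field \<Rightarrow> 'v::ab_group_add \<Rightarrow> 'v) \<Rightarrow> ('v \<Rightarrow> 'v \<Rightarrow> 'f) \<Rightarrow> 'v set \<Rightarrow> 'v set \<Rightarrow> 'v set \<Rightarrow> bool" where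
  "inc_lt scale s p U W \<longleftrightarrow>
     vector_space.dim scale U < vector_space.dim scale W \<and>
     ((odd (vector_space.dim scale W) \<and> U \<subseteq> W) \<or>
      (even (vector_space.dim scale W) \<and> U \<subseteq> W \<and> U \<inter> Rad s (W \<inter> orth s p) = {0}))"

definition incident :: "('f::field \<Rightarrow> 'v::ab_group_add \<Rightarrow> 'v) \<Rightarrow> ('v \<Rightarrow> 'v \<Rightarrow> 'f) \<Rightarrow> 'v set \<Rightarrow> 'v set \<Rightarrow> 'v set \<Rightarrow> 'v set \<Rightarrow> bool" where
  "incident scale s p H U W \<longleftrightarrow>
     is_object scale s p H U \<and> is_object scale s p H W \<and> U \<noteq> W \<and>
     (inc_lt scale s p U W \<or> inc_lt scale s p W U)"

text \<open>Paths in a geometry with object predicate Obj and incidence relation I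
  (a path of length k is a list of k+1 objects).\<close>
definition is_path :: "('a \<Rightarrow> bool) \<Rightarrow> ('a \<Rightarrow> 'a \<Rightarrow> bool) \<Rightarrow> 'a list \<Rightarrow> bool" where
  "is_path Obj I xs \<longleftrightarrow> xs \<noteq> [] \<and> (\<forall>x\<in>set xs. Obj x) \<and>
     (\<forall>i. Suc i < length xs \<longrightarrow> I (xs ! i) (xs ! Suc i) \<and> xs ! i \<noteq> xs ! Suc i)"

definition is_closed_path :: "('a \<Rightarrow> bool) \<Rightarrow> ('a \<Rightarrow> 'a \<Rightarrow> bool) \<Rightarrow> 'a list \<Rightarrow> bool" where
  "is_closed_path Obj I xs \<longleftrightarrow> is_path Obj I xs \<and> hd xs = last xs"

text \<open>One elementary step: insert a closed path of length 2 or 3 (based at a vertex a of the path).\<close>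
definition insert_step :: "('a \<Rightarrow> bool) \<Rightarrow> ('a \<Rightarrow> 'a \<Rightarrow> bool) \<Rightarrow> 'a list \<Rightarrow> 'a list \<Rightarrow> bool" where
  "insert_step Obj I \<gamma> \<delta> \<longleftrightarrow> is_path Obj I \<gamma> \<and>
     (\<exists>xs a ys c. \<gamma> = xs @ a # ys \<and> \<delta> = xs @ a # c @ ys \<and>
        is_closed_path Obj I (a # c) \<and> (length c = 2 \<or> length c = 3))"

definition homotopic :: "('a \<Rightarrow> bool) \<Rightarrow> ('a \<Rightarrow> 'a \<Rightarrow> bool) \<Rightarrow> 'a list \<Rightarrow> 'a list \<Rightarrow> bool" where
  "homotopic Obj I = (\<lambda>\<gamma> \<delta>. insert_step Obj I \<gamma> \<delta> \<or> insert_step Obj I \<delta> \<gamma>)\<^sup>*\<^sup>*"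

definition null_homotopic :: "('a \<Rightarrow> bool) \<Rightarrow> ('a \<Rightarrow> 'a \<Rightarrow> bool) \<Rightarrow> 'a list \<Rightarrow> bool" where
  "null_homotopic Obj I \<gamma> \<longleftrightarrow> homotopic Obj I \<gamma> [hd \<gamma>]"

definition is_triangle :: "('f::field \<Rightarrow> 'v::ab_group_add \<Rightarrow> 'v) \<Rightarrow> ('v \<Rightarrow> 'v \<Rightarrow> 'f) \<Rightarrow> 'v set \<Rightarrow> 'v set \<Rightarrow> 'v set list \<Rightarrow> bool" where
  "is_triangle scale s p H \<gamma> \<longleftrightarrow>
     (\<exists>x1 L1 x2 L2 x3 L3. \<gamma> = [x1, L1, x2, L2, x3, L3, x1] \<and>
        (\<forall>x\<in>{x1, x2, x3}. vector_space.dim scale x = 1) \<and>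
        (\<forall>L\<in>{L1, L2, L3}. vector_space.dim scale L = 2) \<and>
        is_path (is_object scale s p H) (incident scale s p H) \<gamma>)"

end

theory Submission
  imports Defs
begin

locale igraph =
  fixes Obj :: "'a \<Rightarrow> bool" and I :: "'a \<Rightarrow> 'a \<Rightarrow> bool"
  assumes I_sym: "I x y \<Longrightarrow> I y x"
    and I_irr: "I x y \<Longrightarrow> x \<noteq> y"
    and I_obj: "I x y \<Longrightarrow> Obj x"
begin

abbreviation "path \<equiv> is_path Obj I"
abbreviation "hom \<equiv> homotopic Obj I"

lemma path_alt: "path xs \<longleftrightarrow> xs \<noteq> [] \<and> (\<forall>x\<in>set xs. Obj x) \<and> successively I xs"
proof -
  have "successively (\<lambda>x y. I x y \<and> x \<noteq> y) xs = successively I xs"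
    using I_irr by (intro successively_cong) auto
  moreover have "(\<forall>i. Suc i < length xs \<longrightarrow> I (xs ! i) (xs ! Suc i) \<and> xs ! i \<noteq> xs ! Suc i)
      = successively (\<lambda>x y. I x y \<and> x \<noteq> y) xs"
    by (simp add: successively_conv_nth)
  ultimately show ?thesis unfolding is_path_def by simp
qed

lemma path_long: "path (x # y # zs) \<longleftrightarrow> I x y \<and> path (y # zs)"
  unfolding path_alt using I_obj by auto

lemma path_single: "path [x] \<longleftrightarrow> Obj x"
  unfolding path_alt by auto

lemma path_replace:
  assumes "path (xs @ \<alpha> @ ys)" "path \<beta>" "\<alpha> \<noteq> []" "hd \<alpha> = hd \<beta>" "last \<alpha> = last \<beta>"
  shows "path (xs @ \<beta> @ ys)"
  using assms unfolding path_alt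
  by (auto simp: successively_append_iff)

lemma path_mid:
  assumes "path (xs @ \<alpha> @ ys)" "\<alpha> \<noteq> []"
  shows "path \<alpha>"
  using assms unfolding path_alt
  by (auto simp: successively_append_iff)

lemma insert_step_props:
  assumes "insert_step Obj I \<gamma> \<delta>"
  shows "path \<delta> \<and> hd \<delta> = hd \<gamma> \<and> last \<delta> = last \<gamma>"
proof -
  from assms obtain xs a ys c where g: "\<gamma> = xs @ a # ys" and d: "\<delta> = xs @ a # c @ ys"
    and cl: "is_closed_path Obj I (a # c)" and pg: "path \<gamma>" and c: "c \<noteq> []"
    unfolding insert_step_def by (metis list.size(3) numeral_2_eq_2 numeral_3_eq_3 nat.distinct(1))
  have la: "last (a # c) = a" using cl unfolding is_closed_path_def by simp
  have "path (xs @ (a # c) @ ys)"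
    using path_replace[of xs "[a]" ys "a # c"] pg cl la g unfolding is_closed_path_def by auto
  moreover have "hd \<delta> = hd \<gamma>" using g d by (cases xs) auto
  moreover have "last \<delta> = last \<gamma>" using g d la c by (cases ys) auto
  ultimately show ?thesis using d by simp
qed

lemma hom_refl: "hom x x" unfolding homotopic_def by simp

lemma hom_sym: "hom x y \<Longrightarrow> hom y x"
  unfolding homotopic_def
proof (induction rule: rtranclp_induct)
  case base then show ?case by simp
next
  case (step y z)
  have "(\<lambda>\<gamma> \<delta>. insert_step Obj I \<gamma> \<delta> \<or> insert_step Obj I \<delta> \<gamma>) z y" using step.hyps(2) by blast
  then show ?case using step.IH by (rule converse_rtranclp_into_rtranclp)
qed

lemma hom_trans: "hom x y \<Longrightarrow> hom y z \<Longrightarrow> hom x z"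
  unfolding homotopic_def by (rule rtranclp_trans)

lemma hom_path:
  assumes "hom \<gamma> \<delta>" "path \<gamma>"
  shows "path \<delta> \<and> hd \<delta> = hd \<gamma> \<and> last \<delta> = last \<gamma>"
  using assms(1) unfolding homotopic_def
proof (induction rule: rtranclp_induct)
  case base then show ?case using assms(2) by simp
next
  case (step y z)
  from step.hyps(2) show ?case
  proof
    assume "insert_step Obj I y z" then show ?thesis using insert_step_props step.IH by auto
  next
    assume h: "insert_step Obj I z y"
    then have "path z" unfolding insert_step_def by auto
    then show ?thesis using insert_step_props[OF h] step.IH by auto
  qed
qed

lemma insert_step_ctx:
  assumes "insert_step Obj I \<gamma> \<delta>" "path (xs @ \<gamma> @ ys)"
  shows "insert_step Obj I (xs @ \<gamma> @ ys) (xs @ \<delta> @ ys)"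
proof -
  from assms obtain as a bs c where g: "\<gamma> = as @ a # bs" and d: "\<delta> = as @ a # c @ bs"
    and cl: "is_closed_path Obj I (a # c)" and c: "length c = 2 \<or> length c = 3"
    unfolding insert_step_def by blast
  show ?thesis unfolding insert_step_def
    apply (rule conjI[OF assms(2)])
    apply (rule exI[of _ "xs @ as"], rule exI[of _ a], rule exI[of _ "bs @ ys"], rule exI[of _ c])
    using g d cl c by auto
qed

lemma hom_ctx:
  assumes "hom \<alpha> \<beta>" "path (xs @ \<alpha> @ ys)" "\<alpha> \<noteq> []"
  shows "hom (xs @ \<alpha> @ ys) (xs @ \<beta> @ ys)"
proof -
  have pa: "path \<alpha>" using path_mid assms by blast
  from assms(1) show ?thesis unfolding homotopic_def[of Obj I]
  proof (induction rule: rtranclp_induct)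
    case base then show ?case by simp
  next
    case (step y z)
    have hy: "hom \<alpha> y" using step.hyps(1) unfolding homotopic_def .
    have py: "path y \<and> hd y = hd \<alpha> \<and> last y = last \<alpha>" using hom_path[OF hy pa] .
    then have y_ne: "y \<noteq> []" unfolding path_alt by auto
    have pxy: "path (xs @ y @ ys)" using path_replace[OF assms(2)] py assms(3) by auto
    from step.hyps(2) have "insert_step Obj I (xs @ y @ ys) (xs @ z @ ys) \<or>
        insert_step Obj I (xs @ z @ ys) (xs @ y @ ys)"
    proof
      assume "insert_step Obj I y z" then show ?thesis using insert_step_ctx pxy by blast
    next
      assume h: "insert_step Obj I z y"
      have pz: "path z \<and> hd z = hd y \<and> last z = last y" using insert_step_props[OF h] h
        unfolding insert_step_def by auto
      have "path (xs @ z @ ys)" using path_replace[OF pxy] pz y_ne by auto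
      then show ?thesis using insert_step_ctx[OF h] by blast
    qed
    with step.IH show ?case by (rule rtranclp.rtrancl_into_rtrancl)
  qed
qed

lemma step_hom: "insert_step Obj I x y \<Longrightarrow> hom x y"
  unfolding homotopic_def by (rule r_into_rtranclp) simp

lemma back_move:
  assumes "path (xs @ [a,b,a] @ ys)"
  shows "hom (xs @ [a,b,a] @ ys) (xs @ [a] @ ys)"
proof -
  have pa: "path [a,b,a]" using path_mid[OF assms] by simp
  have "Obj a" using pa I_obj by (auto simp: path_long)
  then have pa1: "path [a]" by (simp add: path_single)
  have ps: "path (xs @ [a] @ ys)" using path_replace[OF assms pa1] by simp
  have cl: "is_closed_path Obj I [a,b,a]" using pa by (simp add: is_closed_path_def)
  have "insert_step Obj I (xs @ [a] @ ys) (xs @ [a,b,a] @ ys)"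
    unfolding insert_step_def
    apply (rule conjI[OF ps])
    apply (rule exI[of _ xs], rule exI[of _ a], rule exI[of _ ys], rule exI[of _ "[b,a]"])
    using cl by simp
  then show ?thesis by (rule hom_sym[OF step_hom])
qed

lemma tri_move:
  assumes p: "path (xs @ [a,b,c] @ ys)" and ac: "I a c"
  shows "hom (xs @ [a,b,c] @ ys) (xs @ [a,c] @ ys)"
proof -
  have pabc: "path [a,b,c]" using path_mid[OF p] by simp
  have pac: "path [a,c]" using ac I_obj I_sym by (auto simp: path_long path_single)
  have ps: "path (xs @ [a,c] @ ys)" using path_replace[OF p pac] by simp
  have ca: "I c a" using I_sym[OF ac] .
  have pcl: "path [a,b,c,a]" using pabc ca I_obj by (auto simp: path_long path_single)
  have st: "insert_step Obj I (xs @ [a,c] @ ys) (xs @ [a,b,c,a,c] @ ys)"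
    unfolding insert_step_def
    apply (rule conjI[OF ps])
    apply (rule exI[of _ xs], rule exI[of _ a], rule exI[of _ "c # ys"], rule exI[of _ "[b,c,a]"])
    using pcl by (simp add: is_closed_path_def)
  have pm: "path ((xs @ [a,b]) @ [c,a,c] @ ys)" using insert_step_props[OF st] by simp
  have "hom ((xs @ [a,b]) @ [c,a,c] @ ys) ((xs @ [a,b]) @ [c] @ ys)" using back_move[OF pm] .
  then have "hom (xs @ [a,b,c,a,c] @ ys) (xs @ [a,b,c] @ ys)" by simp
  then have "hom (xs @ [a,c] @ ys) (xs @ [a,b,c] @ ys)" using step_hom[OF st] hom_trans by blast
  then show ?thesis by (rule hom_sym)
qed

lemma tri_move':
  assumes p: "path (xs @ [a,c] @ ys)" and "I a b" "I b c"
  shows "hom (xs @ [a,c] @ ys) (xs @ [a,b,c] @ ys)"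
proof -
  have "I c b" using I_sym assms by blast
  then have pb: "path [a,b,c]" using assms I_obj by (auto simp: path_long path_single)
  have "path (xs @ [a,b,c] @ ys)" using path_replace[OF p pb] by simp
  moreover have "I a c" using path_mid[OF p] by (simp add: path_long)
  ultimately show ?thesis using tri_move hom_sym by blast
qed

lemma back_move':
  assumes p: "path (xs @ [a] @ ys)" and "I a b"
  shows "hom (xs @ [a] @ ys) (xs @ [a,b,a] @ ys)"
proof -
  have "I b a" using I_sym assms by blast
  then have pb: "path [a,b,a]" using assms I_obj by (auto simp: path_long path_single)
  have "path (xs @ [a,b,a] @ ys)" using path_replace[OF p pb] by simp
  then show ?thesis using back_move hom_sym by blast
qed

lemma cone_seg:
  assumes p: "path (xs @ [x,L,y] @ ys)" and "I x W" "I L W" "I y W"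
  shows "hom (xs @ [x,L,y] @ ys) (xs @ [x,W,y] @ ys)"
proof -
  have 1: "hom ((xs @ [x]) @ [L,y] @ ys) ((xs @ [x]) @ [L,W,y] @ ys)"
    using tri_move'[of "xs @ [x]" L y ys W] p assms I_sym[of y W] by simp
  have "path ((xs @ [x]) @ [L,W,y] @ ys)" using hom_path[OF 1] p by simp
  then have 2: "hom (xs @ [x,L,W] @ (y # ys)) (xs @ [x,W] @ (y # ys))"
    using tri_move[of xs x L W "y # ys"] assms by simp
  show ?thesis using hom_trans[OF 1[simplified] 2[simplified]] by simp
qed

lemma cone_seg':
  assumes p: "path (xs @ [x,W,y] @ ys)" and "I x L" "I L y" "I L W"
  shows "hom (xs @ [x,W,y] @ ys) (xs @ [x,L,y] @ ys)"
proof -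
  have "I y L" using I_sym assms by blast
  then have pb: "path [x,L,y]" using assms I_obj by (auto simp: path_long path_single)
  have pp: "path (xs @ [x,L,y] @ ys)" using path_replace[OF p pb] by simp
  have "I x W" "I W y" using path_mid[OF p] by (auto simp: path_long)
  then show ?thesis using cone_seg[OF pp] assms I_sym hom_sym by blast
qed

lemma cone_tri:
  assumes p: "path [x1,L1,x2,L2,x3,L3,x1]"
    and "I x1 W" "I x2 W" "I x3 W" "I L1 W" "I L2 W" "I L3 W"
  shows "hom [x1,L1,x2,L2,x3,L3,x1] [x1]"
proof -
  have h1: "hom [x1,L1,x2,L2,x3,L3,x1] [x1,W,x2,L2,x3,L3,x1]"
    using cone_seg[of "[]" x1 L1 x2 "[L2,x3,L3,x1]" W] p assms by simp
  have p1: "path [x1,W,x2,L2,x3,L3,x1]" using hom_path[OF h1 p] by simp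
  have h2: "hom [x1,W,x2,L2,x3,L3,x1] [x1,W,x2,W,x3,L3,x1]"
    using cone_seg[of "[x1,W]" x2 L2 x3 "[L3,x1]" W] p1 assms by simp
  have p2: "path [x1,W,x2,W,x3,L3,x1]" using hom_path[OF h2 p1] by simp
  have h3: "hom [x1,W,x2,W,x3,L3,x1] [x1,W,x2,W,x3,W,x1]"
    using cone_seg[of "[x1,W,x2,W]" x3 L3 x1 "[]" W] p2 assms by simp
  have p3: "path [x1,W,x2,W,x3,W,x1]" using hom_path[OF h3 p2] by simp
  have h4: "hom [x1,W,x2,W,x3,W,x1] [x1,W,x3,W,x1]"
    using back_move[of "[x1]" W x2 "[x3,W,x1]"] p3 by simp
  have p4: "path [x1,W,x3,W,x1]" using hom_path[OF h4 p3] by simp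
  have h5: "hom [x1,W,x3,W,x1] [x1,W,x1]"
    using back_move[of "[x1]" W x3 "[x1]"] p4 by simp
  have p5: "path [x1,W,x1]" using hom_path[OF h5 p4] by simp
  have h6: "hom [x1,W,x1] [x1]"
    using back_move[of "[]" x1 W "[]"] p5 by simp
  show ?thesis using h1 h2 h3 h4 h5 h6 hom_trans by blast
qed

lemma apex_seg:
  assumes p: "path (xs @ [x,L,y] @ ys)"
    and "I x W" "I L W" "I y W" "I Q W" "I M W" "I M' W"
    and "I x M" "I Q M" "I Q M'" "I y M'"
  shows "hom (xs @ [x,L,y] @ ys) (xs @ [x,M,Q,M',y] @ ys)"
proof -
  have h1: "hom (xs @ [x,L,y] @ ys) (xs @ [x,W,y] @ ys)" using cone_seg[OF p] assms by blast
  have p1: "path ((xs @ [x]) @ [W] @ (y # ys))" using hom_path[OF h1 p] by simp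
  have h2: "hom ((xs @ [x]) @ [W] @ (y # ys)) ((xs @ [x]) @ [W,Q,W] @ (y # ys))"
    using back_move'[OF p1] I_sym assms by blast
  have p2: "path (xs @ [x,W,Q] @ (W # y # ys))" using hom_path[OF h2 p1] by simp
  have h3: "hom (xs @ [x,W,Q] @ (W # y # ys)) (xs @ [x,M,Q] @ (W # y # ys))"
    using cone_seg'[OF p2] I_sym assms by blast
  have p3: "path ((xs @ [x,M]) @ [Q,W,y] @ ys)" using hom_path[OF h3 p2] by simp
  have h4: "hom ((xs @ [x,M]) @ [Q,W,y] @ ys) ((xs @ [x,M]) @ [Q,M',y] @ ys)"
    using cone_seg'[OF p3] I_sym assms by blast
  have "hom (xs @ x # L # y # ys) (xs @ x # M # Q # M' # y # ys)"
    using hom_trans[OF h1[simplified] hom_trans[OF h2[simplified] hom_trans[OF h3[simplified] h4[simplified]]]] .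
  then show ?thesis by simp
qed

lemma apex_tri:
  assumes p: "path [x1,L1,x2,L2,x3,L3,x1]"
    and w1: "I x1 W1" "I L1 W1" "I x2 W1" "I Q W1" "I M1 W1" "I M2 W1"
    and w2: "I x2 W2" "I L2 W2" "I x3 W2" "I Q W2" "I M2 W2" "I M3 W2"
    and w3: "I x3 W3" "I L3 W3" "I x1 W3" "I Q W3" "I M3 W3" "I M1 W3"
    and m: "I x1 M1" "I x2 M2" "I x3 M3" "I Q M1" "I Q M2" "I Q M3"
  shows "hom [x1,L1,x2,L2,x3,L3,x1] [x1]"
proof -
  have h1: "hom ([] @ [x1,L1,x2] @ [L2,x3,L3,x1]) ([] @ [x1,M1,Q,M2,x2] @ [L2,x3,L3,x1])"
    by (rule apex_seg) (use p w1 m in auto)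
  have p1: "path ([x1,M1,Q,M2] @ [x2,L2,x3] @ [L3,x1])" using hom_path[OF h1] p by simp
  have h2: "hom ([x1,M1,Q,M2] @ [x2,L2,x3] @ [L3,x1]) ([x1,M1,Q,M2] @ [x2,M2,Q,M3,x3] @ [L3,x1])"
    by (rule apex_seg[OF p1]) (use w2 m in auto)
  have p2: "path ([x1,M1,Q,M2,x2,M2,Q,M3] @ [x3,L3,x1] @ [])" using hom_path[OF h2] p1 by simp
  have h3: "hom ([x1,M1,Q,M2,x2,M2,Q,M3] @ [x3,L3,x1] @ []) ([x1,M1,Q,M2,x2,M2,Q,M3] @ [x3,M3,Q,M1,x1] @ [])"
    by (rule apex_seg[OF p2]) (use w3 m in auto)
  have p3: "path ([x1,M1,Q] @ [M2,x2,M2] @ [Q,M3,x3,M3,Q,M1,x1])" using hom_path[OF h3] p2 by simp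
  note h4 = back_move[OF p3]
  have p4: "path ([x1,M1] @ [Q,M2,Q] @ [M3,x3,M3,Q,M1,x1])" using hom_path[OF h4] p3 by simp
  note h5 = back_move[OF p4]
  have p5: "path ([x1,M1,Q] @ [M3,x3,M3] @ [Q,M1,x1])" using hom_path[OF h5] p4 by simp
  note h6 = back_move[OF p5]
  have p6: "path ([x1,M1] @ [Q,M3,Q] @ [M1,x1])" using hom_path[OF h6] p5 by simp
  note h7 = back_move[OF p6]
  have p7: "path ([x1] @ [M1,Q,M1] @ [x1])" using hom_path[OF h7] p6 by simp
  note h8 = back_move[OF p7]
  have p8: "path ([] @ [x1,M1,x1] @ [])" using hom_path[OF h8] p7 by simp
  note h9 = back_move[OF p8]
  note hs = h1 h2 h3 h4 h5 h6 h7 h8 h9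
  show ?thesis using hs[simplified] hom_trans by meson
qed

lemma backtrack_loop:
  assumes "path [x,L,x]" shows "hom [x,L,x] [x]"
  using back_move[of "[]" x L "[]"] assms by simp

end


fun lcomb :: "('f \<Rightarrow> 'v \<Rightarrow> 'v) \<Rightarrow> 'f list \<Rightarrow> 'v::ab_group_add list \<Rightarrow> 'v" where
  "lcomb sc (c # cs) (x # xs) = sc c x + lcomb sc cs xs"
| "lcomb sc _ _ = 0"

context vector_space begin

lemma span_list: "v \<in> span (set xs) \<longleftrightarrow> (\<exists>cs. length cs = length xs \<and> v = lcomb scale cs xs)"
proof (induction xs arbitrary: v)
  case Nil then show ?case by simp
next
  case (Cons x xs)
  have "v \<in> span (set (x # xs)) \<longleftrightarrow> (\<exists>k. v - scale k x \<in> span (set xs))"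
    by (simp add: span_breakdown_eq)
  also have "\<dots> \<longleftrightarrow> (\<exists>k cs. length cs = length xs \<and> v - scale k x = lcomb scale cs xs)"
    using Cons by simp
  also have "\<dots> \<longleftrightarrow> (\<exists>cs. length cs = length (x # xs) \<and> v = lcomb scale cs (x # xs))"
  proof
    assume "\<exists>k cs. length cs = length xs \<and> v - scale k x = lcomb scale cs xs"
    then obtain k cs where "length cs = length xs" "v - scale k x = lcomb scale cs xs" by blast
    then show "\<exists>cs. length cs = length (x # xs) \<and> v = lcomb scale cs (x # xs)"
      by (intro exI[of _ "k # cs"]) (auto simp: algebra_simps)
  next
    assume "\<exists>cs. length cs = length (x # xs) \<and> v = lcomb scale cs (x # xs)"
    then obtain cs where "length cs = length (x # xs)" "v = lcomb scale cs (x # xs)" by blast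
    then show "\<exists>k cs. length cs = length xs \<and> v - scale k x = lcomb scale cs xs"
      by (cases cs) (auto simp: algebra_simps)
  qed
  finally show ?case .
qed

lemma indep_list:
  assumes "\<And>cs. length cs = length xs \<Longrightarrow> lcomb scale cs xs = 0 \<Longrightarrow> \<forall>c\<in>set cs. c = 0"
  shows "distinct xs \<and> independent (set xs)"
  using assms
proof (induction xs)
  case Nil then show ?case by (simp add: independent_empty)
next
  case (Cons x xs)
  have "distinct xs \<and> independent (set xs)"
  proof (rule Cons.IH)
    fix cs assume "length cs = length xs" "lcomb scale cs xs = 0"
    then show "\<forall>c\<in>set cs. c = 0" using Cons.prems[of "0 # cs"] by simp
  qed
  moreover have nx: "x \<notin> span (set xs)"
  proof
    assume "x \<in> span (set xs)"
    then obtain cs where "length cs = length xs" "x = lcomb scale cs xs" using span_list by blast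
    then have "lcomb scale ((-1) # cs) (x # xs) = 0" by simp
    then show False using Cons.prems[of "(-1) # cs"] \<open>length cs = length xs\<close> by simp
  qed
  moreover have "x \<notin> set xs" using nx span_base by blast
  ultimately show ?case by (simp add: independent_insertI)
qed

lemma dim_list:
  assumes "\<And>cs. length cs = length xs \<Longrightarrow> lcomb scale cs xs = 0 \<Longrightarrow> \<forall>c\<in>set cs. c = 0"
  shows "dim (span (set xs)) = length xs"
  using indep_list[OF assms] dim_span_eq_card_independent distinct_card by metis

lemma len3: "length cs = 3 \<Longrightarrow> \<exists>c1 c2 c3. cs = [c1,c2,c3]"
  by (auto simp: length_Suc_conv numeral_eq_Suc)
lemma len2: "length cs = 2 \<Longrightarrow> \<exists>c1 c2. cs = [c1,c2]"
  by (auto simp: length_Suc_conv numeral_eq_Suc)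
lemma len5: "length cs = 5 \<Longrightarrow> \<exists>c1 c2 c3 c4 c5. cs = [c1,c2,c3,c4,c5]"
  by (auto simp: length_Suc_conv numeral_eq_Suc)
lemma len6: "length cs = 6 \<Longrightarrow> \<exists>c1 c2 c3 c4 c5 c6. cs = [c1,c2,c3,c4,c5,c6]"
  by (auto simp: length_Suc_conv numeral_eq_Suc)

lemma span2: "v \<in> span {a, b} \<longleftrightarrow> (\<exists>x y. v = scale x a + scale y b)"
proof
  assume "v \<in> span {a, b}"
  then have "\<exists>cs. length cs = 2 \<and> v = lcomb scale cs [a,b]" using span_list[of v "[a,b]"] by (simp add: numeral_eq_Suc)
  then obtain cs where "length cs = 2" "v = lcomb scale cs [a,b]" by blast
  then show "\<exists>x y. v = scale x a + scale y b" using len2[of cs] by fastforce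
next
  assume "\<exists>x y. v = scale x a + scale y b"
  then obtain x y where "v = lcomb scale [x,y] [a,b]" by auto
  then show "v \<in> span {a, b}" using span_list[of v "[a,b]"] by (metis list.set(1,2) list.size(3,4))
qed

lemma span3: "v \<in> span {a, b, c} \<longleftrightarrow> (\<exists>x y z. v = scale x a + scale y b + scale z c)"
proof
  assume "v \<in> span {a, b, c}"
  then have "\<exists>cs. length cs = 3 \<and> v = lcomb scale cs [a,b,c]" using span_list[of v "[a,b,c]"] by (simp add: numeral_eq_Suc)
  then obtain cs where "length cs = 3" "v = lcomb scale cs [a,b,c]" by blast
  then show "\<exists>x y z. v = scale x a + scale y b + scale z c" using len3[of cs] by (fastforce simp: add.assoc)
next
  assume "\<exists>x y z. v = scale x a + scale y b + scale z c"
  then obtain x y z where "v = lcomb scale [x,y,z] [a,b,c]" by (auto simp: add.assoc)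
  then show "v \<in> span {a, b, c}" using span_list[of v "[a,b,c]"] by (metis list.set(1,2) list.size(3,4))
qed

lemma span5: "v \<in> span {a, b, c, d, g} \<longleftrightarrow>
   (\<exists>x y z w t. v = scale x a + scale y b + scale z c + scale w d + scale t g)"
proof
  assume "v \<in> span {a, b, c, d, g}"
  then have "\<exists>cs. length cs = 5 \<and> v = lcomb scale cs [a,b,c,d,g]" using span_list[of v "[a,b,c,d,g]"] by (simp add: numeral_eq_Suc)
  then obtain cs where "length cs = 5" "v = lcomb scale cs [a,b,c,d,g]" by blast
  moreover obtain c1 c2 c3 c4 c5 where "cs = [c1,c2,c3,c4,c5]" using len5[OF calculation(1)] by blast
  ultimately have "v = scale c1 a + scale c2 b + scale c3 c + scale c4 d + scale c5 g"
    by (simp add: add.assoc)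
  then show "\<exists>x y z w t. v = scale x a + scale y b + scale z c + scale w d + scale t g"
    by blast
next
  assume "\<exists>x y z w t. v = scale x a + scale y b + scale z c + scale w d + scale t g"
  then obtain x y z w t where "v = lcomb scale [x,y,z,w,t] [a,b,c,d,g]" by (auto simp: add.assoc)
  then show "v \<in> span {a, b, c, d, g}" using span_list[of v "[a,b,c,d,g]"] by (metis list.set(1,2) list.size(3,4))
qed

lemma dim2:
  assumes "\<And>x y. scale x a + scale y b = 0 \<Longrightarrow> x = 0 \<and> y = 0"
  shows "dim (span {a, b}) = 2"
proof -
  have "dim (span (set [a,b])) = length [a,b]"
  proof (rule dim_list)
    fix cs :: "'a list" assume "length cs = length [a,b]" "lcomb scale cs [a,b] = 0"
    moreover have "length cs = 2" using calculation(1) by simp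
    moreover obtain c1 c2 where "cs = [c1,c2]" using len2[OF calculation(3)] by blast
    ultimately show "\<forall>c\<in>set cs. c = 0" using assms by auto
  qed
  then show ?thesis by simp
qed

lemma dim3:
  assumes "\<And>x y z. scale x a + scale y b + scale z c = 0 \<Longrightarrow> x = 0 \<and> y = 0 \<and> z = 0"
  shows "dim (span {a, b, c}) = 3"
proof -
  have "dim (span (set [a,b,c])) = length [a,b,c]"
  proof (rule dim_list)
    fix cs :: "'a list" assume "length cs = length [a,b,c]" "lcomb scale cs [a,b,c] = 0"
    moreover have "length cs = 3" using calculation(1) by simp
    moreover obtain c1 c2 c3 where "cs = [c1,c2,c3]" using len3[OF calculation(3)] by blast
    ultimately show "\<forall>c\<in>set cs. c = 0" using assms by (auto simp: add.assoc)
  qed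
  then show ?thesis by simp
qed

lemma dim5:
  assumes "\<And>x y z w t. scale x a + scale y b + scale z c + scale w d + scale t g = 0 \<Longrightarrow>
     x = 0 \<and> y = 0 \<and> z = 0 \<and> w = 0 \<and> t = 0"
  shows "dim (span {a, b, c, d, g}) = 5"
proof -
  have "dim (span (set [a,b,c,d,g])) = length [a,b,c,d,g]"
  proof (rule dim_list)
    fix cs :: "'a list" assume "length cs = length [a,b,c,d,g]" "lcomb scale cs [a,b,c,d,g] = 0"
    moreover have "length cs = 5" using calculation(1) by simp
    moreover obtain c1 c2 c3 c4 c5 where "cs = [c1,c2,c3,c4,c5]" using len5[OF calculation(3)] by blast
    ultimately show "\<forall>c\<in>set cs. c = 0" using assms by (auto simp: add.assoc)
  qed
  then show ?thesis by simp
qed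

lemma indep6:
  assumes "\<And>x y z w t u. scale x a + scale y b + scale z c + scale w d + scale t g + scale u h = 0 \<Longrightarrow>
     x = 0 \<and> y = 0 \<and> z = 0 \<and> w = 0 \<and> t = 0 \<and> u = 0"
  shows "independent {a, b, c, d, g, h} \<and> card {a, b, c, d, g, h} = 6"
proof -
  have "distinct [a,b,c,d,g,h] \<and> independent (set [a,b,c,d,g,h])"
  proof (rule indep_list)
    fix cs :: "'a list" assume "length cs = length [a,b,c,d,g,h]" "lcomb scale cs [a,b,c,d,g,h] = 0"
    moreover have "length cs = 6" using calculation(1) by simp
    moreover obtain c1 c2 c3 c4 c5 c6 where "cs = [c1,c2,c3,c4,c5,c6]" using len6[OF calculation(3)] by blast
    ultimately show "\<forall>c\<in>set cs. c = 0" using assms by (auto simp: add.assoc)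
  qed
  then show ?thesis using distinct_card[of "[a,b,c,d,g,h]"] by simp
qed

end


locale geom = finite_dimensional_vector_space scale Bs
  for scale :: "'f::field \<Rightarrow> 'v::ab_group_add \<Rightarrow> 'v" (infixr "*s" 75) and Bs :: "'v set" +
  fixes s :: "'v \<Rightarrow> 'v \<Rightarrow> 'f" and p H :: "'v set" and n :: nat and e r :: 'v
  assumes dimV: "dim (UNIV :: 'v set) = n" and odd_n: "odd n"
    and form: "alt_bilinear scale s"
    and p_eq: "p = span {e}" and e_nz: "e \<noteq> 0"
    and H_subsp: "subspace H" and e_notH: "e \<notin> H"
    and H_dec: "\<And>x. \<exists>h t. h \<in> H \<and> x = h + t *s e"
    and maxrank: "dim (Rad s UNIV) \<le> 1" and r_Rad0: "r \<in> Rad s UNIV"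
    and r_nz: "r \<noteq> 0" and r_H: "r \<in> H"
begin

lemma A1: "s (a *s x + y) z = a * s x z + s y z" using form unfolding alt_bilinear_def by blast
lemma A2: "s x (a *s y + z) = a * s x y + s x z" using form unfolding alt_bilinear_def by blast
lemma s_self[simp]: "s x x = 0" using form unfolding alt_bilinear_def by blast

lemma s_zeroL[simp]: "s 0 z = 0"
proof -
  have "s (1 *s 0 + 0) z = 1 * s 0 z + s 0 z" by (rule A1)
  then have "s 0 z = s 0 z + s 0 z" by (simp only: scale_zero_right add_0_right mult.left_neutral)
  then show ?thesis by (metis add_cancel_left_right)
qed
lemma s_zeroR[simp]: "s z 0 = 0"
proof -
  have "s z (1 *s 0 + 0) = 1 * s z 0 + s z 0" by (rule A2)
  then have "s z 0 = s z 0 + s z 0" by (simp only: scale_zero_right add_0_right mult.left_neutral)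
  then show ?thesis by (metis add_cancel_left_right)
qed
lemma s_addL[simp]: "s (x + y) z = s x z + s y z"
  using A1[of 1 x y z] by simp
lemma s_addR[simp]: "s z (x + y) = s z x + s z y"
  using A2[of z 1 x y] by simp
lemma s_scaleL[simp]: "s (a *s x) z = a * s x z"
  using A1[of a x 0 z] by simp
lemma s_scaleR[simp]: "s z (a *s x) = a * s z x"
  using A2[of z a x 0] by simp
lemma s_negL[simp]: "s (- x) z = - s x z"
  using s_scaleL[of "-1" x z] by simp
lemma s_negR[simp]: "s z (- x) = - s z x"
  using s_scaleR[of z "-1" x] by simp
lemma s_diffL[simp]: "s (x - y) z = s x z - s y z"
  using s_addL[of x "-y" z] by simp
lemma s_diffR[simp]: "s z (x - y) = s z x - s z y"
  using s_addR[of z x "-y"] by simp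
lemma s_anti: "s y x = - s x y"
proof -
  have "s (x + y) (x + y) = s x x + s y x + (s x y + s y y)" by (simp only: s_addL s_addR)
  then have "s x y + s y x = 0" by (simp add: add.commute)
  then show ?thesis by (simp add: add_eq_0_iff)
qed

lemma orth_subspace: "subspace (orth s U)"
  unfolding subspace_def orth_def by simp

lemma Rad_subspace: "subspace U \<Longrightarrow> subspace (Rad s U)"
  unfolding Rad_def using orth_subspace subspace_inter by blast

lemma R_eq: "Rad s UNIV = span {r}"
proof -
  have sR: "subspace (Rad s UNIV)" using Rad_subspace[OF subspace_UNIV] .
  have "span {r} \<subseteq> Rad s UNIV" using span_minimal[OF _ sR] r_Rad0 by simp
  moreover have "dim (span {r}) = 1" using r_nz by simp
  ultimately show ?thesis using subspace_dim_equal[of "span {r}" "Rad s UNIV"] sR maxrank by simp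
qed

lemma rad_iff: "x \<in> span {r} \<longleftrightarrow> (\<forall>u. s u x = 0)"
  by (simp add: R_eq[symmetric] Rad_def orth_def)

lemma r_left[simp]: "s r u = 0" and r_right[simp]: "s u r = 0"
proof -
  show "s u r = 0" using rad_iff[of r] span_base[of r "{r}"] by simp
  then show "s r u = 0" using s_anti[of u r] by simp
qed

lemma span_r_H: "span {r} \<subseteq> H"
  using span_minimal[of "{r}" H, OF _ H_subsp] r_H by simp

lemma in_span_r: "x \<in> span {r} \<longleftrightarrow> (\<exists>t. x = t *s r)"
  by (auto simp: span_singleton)

lemma e_p: "e \<in> p" using p_eq span_base by blast

lemma se_e[simp]: "s e e = 0" by simp

lemma H_span: "X \<subseteq> H \<Longrightarrow> span X \<subseteq> H"
  by (rule span_minimal[OF _ H_subsp])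

lemma scale_e_H: "t *s e \<in> H \<Longrightarrow> t = 0"
proof (rule ccontr)
  assume "t *s e \<in> H" "t \<noteq> 0"
  then have "inverse t *s (t *s e) \<in> H" using subspace_scale[OF H_subsp] by blast
  then show False using \<open>t \<noteq> 0\<close> e_notH by simp
qed


definition D :: "'v \<Rightarrow> 'v \<Rightarrow> 'v \<Rightarrow> 'f" where
  "D a b c = s b c * s e a - s a c * s e b + s a b * s e c"

lemma not_orth_p: "s e x \<noteq> 0 \<Longrightarrow> x \<notin> orth s p"
  unfolding orth_def using e_p by auto

lemma orth_p_iff: "x \<in> orth s p \<longleftrightarrow> s e x = 0"
  unfolding orth_def p_eq span_singleton by auto

abbreviation "Obj \<equiv> is_object scale s p H"
abbreviation "Inc \<equiv> incident scale s p H"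

lemma r_Rad: "r \<in> Rad s UNIV" using R_eq span_base by blast

lemma obj_I:
  assumes "subspace U" "U \<subseteq> H" "1 \<le> dim U" "dim U + 2 \<le> n" "r \<notin> U"
    "dim (Rad s U) \<le> 2" "Rad s U = {0} \<or> (\<exists>w\<in>Rad s U. s e w \<noteq> 0)"
  shows "Obj U"
proof -
  have "\<not> Rad s UNIV \<subseteq> U" using r_Rad assms(5) by blast
  moreover have "Rad s U = {0} \<or> \<not> Rad s U \<subseteq> orth s p" using assms(7) not_orth_p by blast
  ultimately show ?thesis using assms dimV unfolding is_object_def by simp
qed

lemma obj_r: "Obj U \<Longrightarrow> r \<notin> U"
proof
  assume "Obj U" "r \<in> U"
  then have "subspace U" "\<not> Rad s UNIV \<subseteq> U" unfolding is_object_def by auto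
  moreover have "span {r} \<subseteq> U" using \<open>r \<in> U\<close> span_minimal[OF _ \<open>subspace U\<close>] by simp
  ultimately show False using R_eq by simp
qed

lemma obj_sub: "Obj U \<Longrightarrow> subspace U" unfolding is_object_def by simp
lemma obj_H: "Obj U \<Longrightarrow> U \<subseteq> H" unfolding is_object_def by simp
lemma obj_dim: "Obj U \<Longrightarrow> dim U + 2 \<le> n" unfolding is_object_def dimV by simp

lemma Rad_sub: "Rad s U \<subseteq> U" unfolding Rad_def by blast

lemma span_scale1: "c \<noteq> 0 \<Longrightarrow> span {c *s x} = span {x}"
proof -
  assume c: "c \<noteq> 0"
  have "x = inverse c *s (c *s x)" using c by simp
  then have "x \<in> span {c *s x}" by (metis span_base span_scale singletonI)
  moreover have "c *s x \<in> span {x}" by (simp add: span_base span_scale)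
  ultimately show ?thesis by (simp add: span_eq)
qed

lemma obj_point:
  assumes u: "u \<in> H" "s e u \<noteq> 0" and n: "3 \<le> n"
  shows "Obj (span {u})" "dim (span {u}) = 1"
proof -
  have u0: "u \<noteq> 0" using u by auto
  show d: "dim (span {u}) = 1" using u0 by simp
  have "r \<notin> span {u}"
  proof
    assume "r \<in> span {u}"
    then obtain k where "r = k *s u" by (auto simp: span_singleton)
    then have "k * s e u = 0" using r_right[of e] by simp
    then show False using u \<open>r = k *s u\<close> r_nz by simp
  qed
  moreover have "dim (Rad s (span {u})) \<le> 2"
    using dim_subset[OF Rad_sub[of "span {u}"]] d by simp
  moreover have "u \<in> Rad s (span {u})"
  proof -
    have "u \<in> span {u}" by (simp add: span_base)
    moreover have "\<forall>v\<in>span {u}. s v u = 0" by (auto simp: span_singleton)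
    ultimately show ?thesis by (simp add: Rad_def orth_def)
  qed
  ultimately show "Obj (span {u})"
    using obj_I[of "span {u}"] H_span[of "{u}"] u d n by auto
qed

lemma obj_line:
  assumes ab: "a \<in> H" "b \<in> H" "s e a \<noteq> 0" and n: "4 \<le> n"
    and ind: "\<And>x y t. x *s a + y *s b = t *s r \<Longrightarrow> x = 0 \<and> y = 0"
  shows "Obj (span {a, b})" "dim (span {a, b}) = 2"
proof -
  show d: "dim (span {a, b}) = 2" by (rule dim2) (use ind[of _ _ 0] in simp)
  have "r \<notin> span {a, b}"
  proof
    assume "r \<in> span {a, b}"
    then obtain x y where "r = x *s a + y *s b" by (auto simp: span2)
    then have "x *s a + y *s b = 1 *s r" by simp
    then show False using ind \<open>r = x *s a + y *s b\<close> r_nz by fastforce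
  qed
  moreover have "dim (Rad s (span {a, b})) \<le> 2"
    using dim_subset[OF Rad_sub[of "span {a, b}"]] d by simp
  moreover have "Rad s (span {a, b}) = {0} \<or> (\<exists>w\<in>Rad s (span {a, b}). s e w \<noteq> 0)"
  proof (cases "s a b = 0")
    case True
    have "a \<in> Rad s (span {a, b})"
    proof -
      have "a \<in> span {a, b}" by (simp add: span_base)
      moreover have "\<forall>v\<in>span {a, b}. s v a = 0" using True s_anti[of a b] by (auto simp: span2)
      ultimately show ?thesis by (simp add: Rad_def orth_def)
    qed
    then show ?thesis using ab by blast
  next
    case False
    have "Rad s (span {a, b}) \<subseteq> {0}"
    proof
      fix v assume v: "v \<in> Rad s (span {a, b})"
      then obtain x y where vx: "v = x *s a + y *s b" unfolding Rad_def by (auto simp: span2)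
      have "s a v = 0" "s b v = 0" using v unfolding Rad_def orth_def by (auto simp: span_base)
      then have "y * s a b = 0" "x * s b a = 0" using vx by auto
      then have "x = 0" "y = 0" using False s_anti[of a b] by auto
      then show "v \<in> {0}" using vx by simp
    qed
    moreover have "0 \<in> Rad s (span {a, b})" unfolding Rad_def orth_def by (simp add: span_zero)
    ultimately show ?thesis by blast
  qed
  ultimately show "Obj (span {a, b})"
    using obj_I[of "span {a, b}"] H_span[of "{a, b}"] ab d n by auto
qed

lemma indR3:
  assumes ab: "D a b c \<noteq> 0" and eq: "x *s a + y *s b + z *s c = t *s r"
  shows "x = 0 \<and> y = 0 \<and> z = 0"
proof -
  define v where "v = x *s a + y *s b + z *s c"
  have v: "v = t *s r" using eq v_def by simp
  have E1: "s v a = 0" "s v b = 0" "s v c = 0" "s e v = 0" using v by simp_all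
  have ab': "s b a = - s a b" "s c a = - s a c" "s c b = - s b c" by (simp_all add: s_anti[symmetric])
  have F1: "x * s a c + y * s b c = 0" using E1(3) ab' unfolding v_def by simp
  have F2: "x * s a b - z * s b c = 0" using E1(2) ab' unfolding v_def by simp
  have F3: "- y * s a b - z * s a c = 0" using E1(1) ab' unfolding v_def by simp
  have F4: "x * s e a + y * s e b + z * s e c = 0" using E1(4) unfolding v_def by simp
  have "x * D a b c = s b c * (x * s e a + y * s e b + z * s e c) - s e b * (x * s a c + y * s b c)
      + s e c * (x * s a b - z * s b c)" by (simp add: D_def algebra_simps)
  then have "x * D a b c = 0" using F1 F2 F4 by simp
  moreover have "y * D a b c = - s a c * (x * s e a + y * s e b + z * s e c) + s e a * (x * s a c + y * s b c)
      - s e c * (- y * s a b - z * s a c)" by (simp add: D_def algebra_simps)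
  then have "y * D a b c = 0" using F1 F3 F4 by simp
  moreover have "z * D a b c = s a b * (x * s e a + y * s e b + z * s e c) - s e a * (x * s a b - z * s b c)
      + s e b * (- y * s a b - z * s a c)" by (simp add: D_def algebra_simps)
  then have "z * D a b c = 0" using F2 F3 F4 by simp
  ultimately show ?thesis using ab by simp
qed

lemma obj_plane:
  assumes abc: "a \<in> H" "b \<in> H" "c \<in> H" and D: "D a b c \<noteq> 0" and n: "5 \<le> n"
  shows "Obj (span {a, b, c})" "dim (span {a, b, c}) = 3"
proof -
  show d: "dim (span {a, b, c}) = 3" by (rule dim3) (use indR3[OF D, of _ _ _ 0] in simp)
  have "r \<notin> span {a, b, c}"
  proof
    assume "r \<in> span {a, b, c}"
    then obtain x y z where "r = x *s a + y *s b + z *s c" by (auto simp: span3)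
    then have "x *s a + y *s b + z *s c = 1 *s r" by simp
    then show False using indR3[OF D] \<open>r = x *s a + y *s b + z *s c\<close> r_nz by fastforce
  qed
  moreover
  have ab': "s b a = - s a b" "s c a = - s a c" "s c b = - s b c" by (simp_all add: s_anti[symmetric])
  define w where "w = s b c *s a - s a c *s b + s a b *s c"
  have wR: "w \<in> Rad s (span {a, b, c})"
  proof -
    have "w \<in> span {a, b, c}" unfolding w_def
      by (intro span_add span_diff span_scale span_base) auto
    moreover have "\<forall>v\<in>span {a, b, c}. s v w = 0"
    proof
      fix v assume "v \<in> span {a, b, c}"
      then obtain x y z where v: "v = x *s a + y *s b + z *s c" by (auto simp: span3)
      have "s a w = 0" "s b w = 0" "s c w = 0" unfolding w_def using ab' by (simp_all add: algebra_simps)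
      then show "s v w = 0" using v by simp
    qed
    ultimately show ?thesis by (simp add: Rad_def orth_def)
  qed
  have sew: "s e w = D a b c" unfolding w_def D_def by (simp add: algebra_simps)
  have "dim (Rad s (span {a, b, c})) \<le> 2"
  proof -
    have sub: "Rad s (span {a, b, c}) \<subseteq> span {a, b, c}" by (rule Rad_sub)
    have "Rad s (span {a, b, c}) \<noteq> span {a, b, c}"
    proof
      assume eq: "Rad s (span {a, b, c}) = span {a, b, c}"
      have "a \<in> Rad s (span {a, b, c})" "b \<in> Rad s (span {a, b, c})" using eq by (auto simp: span_base)
      then have "s b a = 0" "s c a = 0" "s c b = 0" unfolding Rad_def orth_def by (auto simp: span_base)
      then have "D a b c = 0" unfolding D_def using ab' by simp
      then show False using D by simp
    qed
    have eqR: "span (Rad s (span {a, b, c})) = Rad s (span {a, b, c})"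
      using Rad_subspace[OF subspace_span[of "{a, b, c}"]] by (simp only: span_eq_iff)
    have "Rad s (span {a, b, c}) \<subset> span {a, b, c}" using sub \<open>Rad s (span {a, b, c}) \<noteq> span {a, b, c}\<close> by blast
    then have "span (Rad s (span {a, b, c})) \<subset> span (span {a, b, c})" by (simp only: eqR span_span)
    then have "dim (Rad s (span {a, b, c})) < dim (span {a, b, c})" by (rule dim_psubset)
    then show ?thesis using d by simp
  qed
  moreover have "\<exists>w'\<in>Rad s (span {a, b, c}). s e w' \<noteq> 0"
    using sew D by (intro bexI[OF _ wR]) simp
  moreover have "span {a, b, c} \<subseteq> H" using H_span[of "{a, b, c}"] abc by simp
  ultimately show "Obj (span {a, b, c})"
    using obj_I[of "span {a, b, c}"] d n by simp
qed

lemma inc_odd: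
  assumes "Obj U" "Obj W" "U \<subseteq> W" "dim U < dim W" "odd (dim W)"
  shows "Inc U W"
  using assms unfolding incident_def inc_lt_def by auto

lemma inc_pt_line:
  assumes "Obj (span {u})" "Obj L" "dim (span {u}) = 1" "dim L = 2" "u \<in> L" "s e u \<noteq> 0"
  shows "Inc (span {u}) L"
proof -
  have sub: "span {u} \<subseteq> L" using span_minimal[OF _ obj_sub[OF assms(2)]] assms(5) by simp
  have "span {u} \<inter> Rad s (L \<inter> orth s p) \<subseteq> {0}"
  proof
    fix v assume v: "v \<in> span {u} \<inter> Rad s (L \<inter> orth s p)"
    then obtain k where vk: "v = k *s u" by (auto simp: span_singleton)
    have "v \<in> orth s p" using v unfolding Rad_def by blast
    then have "k * s e u = 0" using vk orth_p_iff by simp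
    then show "v \<in> {0}" using vk assms(6) by simp
  qed
  moreover have "0 \<in> span {u} \<inter> Rad s (L \<inter> orth s p)"
    using span_zero obj_sub[OF assms(2)] subspace_0 orth_subspace unfolding Rad_def orth_def by auto
  ultimately have "span {u} \<inter> Rad s (L \<inter> orth s p) = {0}" by blast
  then have "inc_lt scale s p (span {u}) L" unfolding inc_lt_def using assms sub by simp
  moreover have "span {u} \<noteq> L" using assms by auto
  ultimately show ?thesis using assms unfolding incident_def by simp
qed

lemma pt_gen:
  assumes "Obj U" "dim U = 1"
  obtains u where "U = span {u}" "u \<in> H" "s e u = 1"
proof -
  obtain B where B: "B \<subseteq> U" "independent B" "U \<subseteq> span B" "card B = dim U"
    using basis_exists[of U] by blast
  have "card B = 1" using B(4) assms(2) by simp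
  then obtain b where Bb: "B = {b}" by (auto simp: card_1_singleton_iff)
  have subU: "subspace U" using obj_sub[OF assms(1)] .
  have "span {b} \<subseteq> U" using B Bb span_minimal[OF _ subU] by simp
  then have Ub: "U = span {b}" using B Bb by auto
  have b0: "b \<noteq> 0" using B Bb by (auto simp: dependent_zero)
  have "Rad s U = U"
  proof -
    have "\<forall>v\<in>U. \<forall>w\<in>U. s v w = 0" unfolding Ub by (auto simp: span_singleton)
    then show ?thesis unfolding Rad_def orth_def by auto
  qed
  moreover have "U \<noteq> {0}" using Ub b0 span_base[of b "{b}"] by auto
  ultimately have "\<not> U \<subseteq> orth s p" using assms(1) unfolding is_object_def by auto
  then obtain v where v: "v \<in> U" "s e v \<noteq> 0" using orth_p_iff by auto
  then obtain k where vk: "v = k *s b" using Ub by (auto simp: span_singleton)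
  have k0: "k \<noteq> 0" using v vk by auto
  define u where "u = inverse (s e v) *s v"
  have "s e u = 1" unfolding u_def using v by simp
  moreover have "span {u} = U"
  proof -
    have "u = (inverse (s e v) * k) *s b" unfolding u_def vk by simp
    moreover have "inverse (s e v) * k \<noteq> 0" using k0 v(2) by simp
    ultimately show ?thesis using span_scale1 Ub by simp
  qed
  moreover have "u \<in> H" using obj_H[OF assms(1)] \<open>span {u} = U\<close> span_base by blast
  ultimately show ?thesis using that by auto
qed

lemma pts_indep:
  assumes "s e a = 1" "s e b = 1" "span {a} \<noteq> span {b}" "x *s a + y *s b = 0"
  shows "x = 0 \<and> y = 0"
proof -
  have "s e (x *s a + y *s b) = 0" using assms(4) by simp
  then have xy: "y = - x" using assms(1,2) by (simp add: add_eq_0_iff)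
  then have "x *s (a - b) = 0" using assms(4) by (simp add: algebra_simps)
  then have "x = 0 \<or> a = b" by simp
  then show ?thesis using assms(3) xy by auto
qed

lemma line_eq:
  assumes "subspace L" "dim L = 2" "a \<in> L" "b \<in> L" "dim (span {a, b}) = 2"
  shows "L = span {a, b}"
proof -
  have "span {a, b} \<subseteq> L" using span_minimal[OF _ assms(1)] assms(3,4) by simp
  then show ?thesis using subspace_dim_equal[of "span {a, b}" L] assms by simp
qed

end


context geom begin

lemma dual1:
  assumes "x \<notin> span {r}"
  obtains c where "s x c = 1"
proof -
  obtain u where "s u x \<noteq> 0" using assms rad_iff by blast
  then have u: "s x u \<noteq> 0" using s_anti[of x u] by simp
  have "s x (inverse (s x u) *s u) = 1" using u by simp
  then show ?thesis using that by blast
qed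

lemma dual2:
  assumes ind: "\<And>a b. a *s x + b *s y \<in> span {r} \<Longrightarrow> a = 0 \<and> b = 0"
  obtains c where "s x c = 0" "s y c = 1"
proof -
  have "x \<notin> span {r}" using ind[of 1 0] by auto
  then obtain cx where cx: "s x cx = 1" by (rule dual1)
  define Y where "Y = y - s y cx *s x"
  have "Y \<notin> span {r}"
  proof
    assume "Y \<in> span {r}"
    then have "(- s y cx) *s x + 1 *s y \<in> span {r}" unfolding Y_def by (simp add: algebra_simps)
    from ind[OF this] show False by simp
  qed
  then obtain c0 where c0: "s Y c0 = 1" by (rule dual1)
  define c where "c = c0 - s x c0 *s cx"
  have "s x c = 0" unfolding c_def using cx by simp
  moreover have "s y c = 1" using c0 cx unfolding c_def Y_def by (simp add: algebra_simps)
  ultimately show ?thesis using that by blast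
qed

lemma dual3:
  assumes ind: "\<And>a b d. a *s x + b *s y + d *s z \<in> span {r} \<Longrightarrow> a = 0 \<and> b = 0 \<and> d = 0"
  obtains c where "s x c = 0" "s y c = 0" "s z c = 1"
proof -
  obtain cx where cx: "s y cx = 0" "s x cx = 1"
  proof (rule dual2[of y x])
    fix a b assume "a *s y + b *s x \<in> span {r}"
    then have "b *s x + a *s y + 0 *s z \<in> span {r}" by (simp add: add.commute)
    then show "a = 0 \<and> b = 0" using ind by blast
  qed
  obtain cy where cy: "s x cy = 0" "s y cy = 1"
  proof (rule dual2[of x y])
    fix a b assume "a *s x + b *s y \<in> span {r}"
    then have "a *s x + b *s y + 0 *s z \<in> span {r}" by simp
    then show "a = 0 \<and> b = 0" using ind by blast
  qed
  define Z where "Z = z - s z cx *s x - s z cy *s y"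
  have "Z \<notin> span {r}"
  proof
    assume "Z \<in> span {r}"
    then have "(- s z cx) *s x + (- s z cy) *s y + 1 *s z \<in> span {r}"
      unfolding Z_def by (simp add: algebra_simps)
    from ind[OF this] show False by simp
  qed
  then obtain c0 where c0: "s Z c0 = 1" by (rule dual1)
  define c where "c = c0 - s x c0 *s cx - s y c0 *s cy"
  have "s x c = 0" unfolding c_def using cx cy by simp
  moreover have "s y c = 0" unfolding c_def using cx cy by simp
  moreover have "s z c = 1" using c0 cx cy unfolding c_def Z_def by (simp add: algebra_simps)
  ultimately show ?thesis using that by blast
qed

lemma proj_H:
  assumes "s x e = 0" "s y e = 0" "s z e = 0"
  obtains h where "h \<in> H" "s x h = s x c" "s y h = s y c" "s z h = s z c"
proof -
  obtain h t where "h \<in> H" "c = h + t *s e" using H_dec by blast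
  then show ?thesis using that assms by simp
qed

lemma s_val: "s x y = a \<Longrightarrow> s y x = - a"
  by (subst s_anti) simp

lemma W5_case:
  assumes u: "u1 \<in> H" "u2 \<in> H" "u3 \<in> H" "s e u1 = 1" "s e u2 = 1" "s e u3 = 1"
    and ind: "\<And>x y z. x *s u1 + y *s u2 + z *s u3 = 0 \<Longrightarrow> x = 0 \<and> y = 0 \<and> z = 0"
    and rS: "r \<notin> span {u1, u2, u3}" and D0: "D u1 u2 u3 = 0"
  obtains W where "Obj W" "dim W = 5" "span {u1, u2, u3} \<subseteq> W"
proof -
  define v where "v = u2 - u1"
  define w where "w = u3 - u1"
  have vH: "v \<in> H" "w \<in> H" using subspace_diff[OF H_subsp] u unfolding v_def w_def by auto
  have ev: "s e v = 0" "s e w = 0" using u unfolding v_def w_def by simp_all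
  have ve: "s v e = 0" "s w e = 0" using ev s_anti[of e v] s_anti[of e w] by simp_all
  have vw: "s v w = 0"
  proof -
    have "s v w = s u2 u3 - s u2 u1 - s u1 u3" unfolding v_def w_def by simp
    also have "\<dots> = D u1 u2 u3" using u s_anti[of u1 u2] unfolding D_def by simp
    finally show ?thesis using D0 by simp
  qed
  have wv: "s w v = 0" using vw s_anti[of v w] by simp
  have key: "a = 0 \<and> b = 0 \<and> d = 0" if h: "a *s e + b *s w + d *s v \<in> span {r}" for a b d
  proof -
    obtain t where ht: "a *s e + b *s w + d *s v = t *s r" using h by (auto simp: in_span_r)
    have "a *s e = t *s r - b *s w - d *s v" using ht by (simp add: algebra_simps)
    moreover have "t *s r - b *s w - d *s v \<in> H"
      using vH r_H subspace_diff[OF H_subsp] subspace_scale[OF H_subsp] by simp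
    ultimately have a0: "a = 0" using scale_e_H by simp
    have bd: "b *s w + d *s v = t *s r" using ht a0 by simp
    have t0: "t = 0"
    proof (rule ccontr)
      assume t: "t \<noteq> 0"
      have "b *s w + d *s v \<in> span {u1, u2, u3}" unfolding v_def w_def
        by (intro span_add span_scale span_diff span_base) auto
      then have "inverse t *s (t *s r) \<in> span {u1, u2, u3}" using bd span_scale by metis
      then show False using t rS by simp
    qed
    then have "(- b - d) *s u1 + d *s u2 + b *s u3 = 0" using bd unfolding v_def w_def
      by (simp add: algebra_simps)
    from ind[OF this] show ?thesis using a0 by simp
  qed
  obtain c0 where c0: "s e c0 = 0" "s w c0 = 0" "s v c0 = 1"
    using dual3[of e w v] key by blast
  obtain c where c: "c \<in> H" "s e c = 0" "s w c = 0" "s v c = 1"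
    using proj_H[of e w v c0] ve c0 by auto
  obtain d0 where d0: "s e d0 = 0" "s v d0 = 0" "s w d0 = 1"
  proof (rule dual3[of e v w])
    fix a b d assume "a *s e + b *s v + d *s w \<in> span {r}"
    then have "a *s e + d *s w + b *s v \<in> span {r}" by (simp add: ac_simps)
    then show "a = 0 \<and> b = 0 \<and> d = 0" using key by blast
  qed
  obtain d where d: "d \<in> H" "s e d = 0" "s v d = 0" "s w d = 1"
    using proj_H[of e v w d0] ve d0 by auto
  have an: "s c v = -1" "s c w = 0" "s d v = 0" "s d w = -1" "s d c = - s c d"
    using s_val[OF c(3)] s_val[OF c(4)] s_val[OF d(3)] s_val[OF d(4)] s_anti[of c d] by simp_all
  have K: "m = 0 \<and> a = 0 \<and> b = 0 \<and> g = 0 \<and> h = 0"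
    if h1: "s e (m *s u1 + a *s v + b *s w + g *s c + h *s d) = 0"
      and h2: "s v (m *s u1 + a *s v + b *s w + g *s c + h *s d) = 0"
      and h3: "s w (m *s u1 + a *s v + b *s w + g *s c + h *s d) = 0"
      and h4: "s c (m *s u1 + a *s v + b *s w + g *s c + h *s d) = 0"
      and h5: "s d (m *s u1 + a *s v + b *s w + g *s c + h *s d) = 0" for m a b g h
  proof -
    have m0: "m = 0" using h1 u(4) ev c(2) d(2) by simp
    have g0: "g = 0" using h2 m0 vw c(4) d(3) by simp
    have h0: "h = 0" using h3 m0 wv c(3) d(4) by simp
    have a0: "a = 0" using h4 m0 h0 an by simp
    have b0: "b = 0" using h5 m0 g0 an by simp
    show ?thesis using m0 a0 b0 g0 h0 by simp
  qed
  define W where "W = span {u1, v, w, c, d}"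
  have dW: "dim W = 5" unfolding W_def
  proof (rule dim5)
    fix m a b g h assume "m *s u1 + a *s v + b *s w + g *s c + h *s d = 0"
    then show "m = 0 \<and> a = 0 \<and> b = 0 \<and> g = 0 \<and> h = 0" using K[of m a b g h] by simp
  qed
  have rW: "r \<notin> W"
  proof
    assume "r \<in> W"
    then obtain m a b g h where rr: "r = m *s u1 + a *s v + b *s w + g *s c + h *s d"
      unfolding W_def by (auto simp: span5)
    have "m = 0 \<and> a = 0 \<and> b = 0 \<and> g = 0 \<and> h = 0" using K[of m a b g h] rr[symmetric] by simp
    then show False using rr r_nz by simp
  qed
  define \<gamma>0 where "\<gamma>0 = s u1 v"
  define \<delta>0 where "\<delta>0 = s u1 w"
  define \<alpha>0 where "\<alpha>0 = - s u1 c - \<delta>0 * s d c"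
  define \<beta>0 where "\<beta>0 = - s u1 d - \<gamma>0 * s c d"
  define \<rho> where "\<rho> = u1 + \<alpha>0 *s v + \<beta>0 *s w + \<gamma>0 *s c + \<delta>0 *s d"
  have au: "s v u1 = - s u1 v" "s w u1 = - s u1 w" "s c u1 = - s u1 c" "s d u1 = - s u1 d"
    using s_anti[of u1 v] s_anti[of u1 w] s_anti[of u1 c] s_anti[of u1 d] by simp_all
  have o1: "s v \<rho> = 0" unfolding \<rho>_def \<gamma>0_def using vw c d au by simp
  have o2: "s w \<rho> = 0" unfolding \<rho>_def \<delta>0_def using wv c d au by simp
  have o3: "s c \<rho> = 0" unfolding \<rho>_def \<alpha>0_def using an au by (simp add: algebra_simps)
  have o4: "s d \<rho> = 0" unfolding \<rho>_def \<beta>0_def using an au by (simp add: algebra_simps)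
  have o0: "s u1 \<rho> = 0"
  proof -
    have "u1 = \<rho> - (\<alpha>0 *s v + \<beta>0 *s w + \<gamma>0 *s c + \<delta>0 *s d)" unfolding \<rho>_def by simp
    then have "s u1 \<rho> = s (\<rho> - (\<alpha>0 *s v + \<beta>0 *s w + \<gamma>0 *s c + \<delta>0 *s d)) \<rho>" by simp
    also have "\<dots> = 0" using o1 o2 o3 o4 by simp
    finally show ?thesis .
  qed
  have orthW: "s x \<rho> = 0" if xW: "x \<in> W" for x
  proof -
    have "x \<in> span {u1, v, w, c, d}" using xW unfolding W_def .
    then obtain m a b g h where "x = m *s u1 + a *s v + b *s w + g *s c + h *s d"
      unfolding span5 by blast
    then show ?thesis using o0 o1 o2 o3 o4 by simp
  qed
  have \<rho>W: "\<rho> \<in> W" unfolding W_def \<rho>_def by (intro span_add span_scale span_base) auto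
  have \<rho>R: "\<rho> \<in> Rad s W" using \<rho>W orthW unfolding Rad_def orth_def by auto
  have se\<rho>: "s e \<rho> = 1" unfolding \<rho>_def using u(4) ev c(2) d(2) by simp
  have RW: "Rad s W \<subseteq> span {\<rho>}"
  proof
    fix x assume xR: "x \<in> Rad s W"
    define x' where "x' = x - s e x *s \<rho>"
    have xW: "x \<in> W" using xR unfolding Rad_def by blast
    have "x' \<in> W" unfolding x'_def W_def using xW \<rho>W unfolding W_def by (intro span_diff span_scale) auto
    then obtain m a b g h where xr: "x' = m *s u1 + a *s v + b *s w + g *s c + h *s d"
      unfolding W_def by (auto simp: span5)
    have ox: "s q x = 0" if "q \<in> W" for q using xR that unfolding Rad_def orth_def by blast
    have gens: "v \<in> W" "w \<in> W" "c \<in> W" "d \<in> W" unfolding W_def by (auto intro: span_base)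
    have "s e x' = 0" unfolding x'_def using se\<rho> by simp
    moreover have "s q x' = 0" if "q \<in> W" for q unfolding x'_def using ox[OF that] orthW[OF that] by simp
    ultimately have "m = 0 \<and> a = 0 \<and> b = 0 \<and> g = 0 \<and> h = 0"
      using K[of m a b g h] gens xr by metis
    then have "x' = 0" using xr by simp
    then have "x = s e x *s \<rho>" unfolding x'_def by simp
    then show "x \<in> span {\<rho>}" by (metis span_base span_scale singletonI)
  qed
  have dR: "dim (Rad s W) \<le> 2"
  proof -
    have "dim (Rad s W) \<le> dim (span {\<rho>})" using dim_subset[OF RW] .
    also have "\<dots> \<le> 1" by simp
    finally show ?thesis by simp
  qed
  have n7: "7 \<le> n"
  proof -
    have "independent {u1, v, w, c, d, e} \<and> card {u1, v, w, c, d, e} = 6"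
    proof (rule indep6)
      fix m a b g h k assume eq: "m *s u1 + a *s v + b *s w + g *s c + h *s d + k *s e = 0"
      have "k *s e = - (m *s u1 + a *s v + b *s w + g *s c + h *s d)" using add_eq_0_iff[THEN iffD1, OF eq] .
      moreover have "- (m *s u1 + a *s v + b *s w + g *s c + h *s d) \<in> H"
        by (intro subspace_neg[OF H_subsp] subspace_add[OF H_subsp] subspace_scale[OF H_subsp])
          (use u vH c d in auto)
      ultimately have k0: "k = 0" using scale_e_H by simp
      then have "m *s u1 + a *s v + b *s w + g *s c + h *s d = 0" using eq by simp
      then have "m = 0 \<and> a = 0 \<and> b = 0 \<and> g = 0 \<and> h = 0" using K[of m a b g h] by simp
      then show "m = 0 \<and> a = 0 \<and> b = 0 \<and> g = 0 \<and> h = 0 \<and> k = 0" using k0 by simp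
    qed
    then have "6 \<le> dim (UNIV :: 'v set)" using independent_card_le_dim[of _ UNIV] by fastforce
    then show ?thesis using dimV odd_n by presburger
  qed
  have WH: "W \<subseteq> H" unfolding W_def using H_span[of "{u1, v, w, c, d}"] u vH c d by simp
  have "Obj W"
  proof (rule obj_I)
    show "subspace W" unfolding W_def by simp
  next
    show "W \<subseteq> H" by (rule WH)
  next
    show "1 \<le> dim W" "dim W + 2 \<le> n" using dW n7 by simp_all
  next
    show "r \<notin> W" by (rule rW)
  next
    show "dim (Rad s W) \<le> 2" by (rule dR)
  next
    show "Rad s W = {0} \<or> (\<exists>w\<in>Rad s W. s e w \<noteq> 0)" using \<rho>R se\<rho> by auto
  qed
  moreover have "span {u1, u2, u3} \<subseteq> W"
  proof (rule span_minimal)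
    have "u2 = u1 + v" "u3 = u1 + w" unfolding v_def w_def by simp_all
    then show "{u1, u2, u3} \<subseteq> W" unfolding W_def by (auto intro: span_add span_base)
  next
    show "subspace W" unfolding W_def by simp
  qed
  ultimately show ?thesis using that dW by blast
qed

lemma apex_case:
  assumes u: "u1 \<in> H" "u2 \<in> H" "u3 \<in> H" "s e u1 = 1" "s e u2 = 1" "s e u3 = 1"
    and ind: "\<And>x y z. x *s u1 + y *s u2 + z *s u3 = 0 \<Longrightarrow> x = 0 \<and> y = 0 \<and> z = 0"
    and rS: "r \<in> span {u1, u2, u3}"
    and r12: "r \<notin> span {u1, u2}" and r23: "r \<notin> span {u2, u3}" and r31: "r \<notin> span {u3, u1}"
  obtains y where "y \<in> H" "s e y \<noteq> 0" "D u1 u2 y \<noteq> 0" "D u2 u3 y \<noteq> 0" "D u3 u1 y \<noteq> 0"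
proof -
  obtain l1 l2 l3 where rr: "r = l1 *s u1 + l2 *s u2 + l3 *s u3" using rS by (auto simp: span3)
  have l3: "l3 \<noteq> 0"
  proof
    assume "l3 = 0"
    then have "r \<in> span {u1, u2}" using rr by (auto simp: span2)
    then show False using r12 by simp
  qed
  have l1: "l1 \<noteq> 0"
  proof
    assume "l1 = 0"
    then have "r \<in> span {u2, u3}" using rr by (auto simp: span2)
    then show False using r23 by simp
  qed
  have l2: "l2 \<noteq> 0"
  proof
    assume "l2 = 0"
    then have "r = l3 *s u3 + l1 *s u1" using rr by (simp add: add.commute)
    then have "r \<in> span {u3, u1}" by (auto simp: span2)
    then show False using r31 by simp
  qed
  define X where "X = u2 - u1 + s u1 u2 *s e"
  have "\<exists>x. s X x \<noteq> 0"
  proof (rule ccontr)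
    assume "\<not> (\<exists>x. s X x \<noteq> 0)"
    then have "\<forall>x. s x X = 0" using s_val[of X _ 0] by simp
    then have XR: "X \<in> span {r}" using rad_iff by blast
    then have XH: "X \<in> H" using span_r_H by blast
    have dH: "u2 - u1 \<in> H" using u subspace_diff[OF H_subsp] by blast
    have "s u1 u2 *s e = X - (u2 - u1)" unfolding X_def by simp
    also have "\<dots> \<in> H" using XH dH subspace_diff[OF H_subsp] by blast
    finally have s0: "s u1 u2 = 0" using scale_e_H by blast
    then have "u2 - u1 \<in> span {r}" using XR unfolding X_def by simp
    then obtain t where t: "u2 - u1 = t *s r" by (auto simp: in_span_r)
    show False
    proof (cases "t = 0")
      case True
      then have "1 *s u1 + (-1) *s u2 + 0 *s u3 = 0" using t by simp
      from ind[OF this] show False by simp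
    next
      case False
      then have "r = inverse t *s (u2 - u1)" using t by simp
      then have "r \<in> span {u1, u2}" by (metis span_diff span_scale span_base insertI1 insertI2 singletonI)
      then show False using r12 by simp
    qed
  qed
  then obtain x0 where x0: "s X x0 \<noteq> 0" by blast
  obtain h t where h: "h \<in> H" "x0 = h + t *s e" using H_dec by blast
  have aue: "s u1 e = -1" "s u2 e = -1" using s_val[OF u(4)] s_val[OF u(5)] by simp_all
  have "s X e = 0" unfolding X_def using aue by simp
  then have Xh: "s X h \<noteq> 0" using x0 h by simp
  have Dh: "D u1 u2 h = s X h" unfolding D_def X_def using u by simp
  define y where "y = (if s e h \<noteq> 0 then h else u1 + h)"
  have yH: "y \<in> H" unfolding y_def using h u subspace_add[OF H_subsp] by auto
  have ey: "s e y \<noteq> 0" unfolding y_def using u by auto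
  have an: "s u2 u1 = - s u1 u2" "s u3 u1 = - s u1 u3" "s u3 u2 = - s u2 u3"
    by (rule s_anti)+
  have D12: "D u1 u2 y \<noteq> 0"
  proof -
    have "D u1 u2 y = D u1 u2 h"
      unfolding y_def D_def using u an by (auto simp: algebra_simps)
    then show ?thesis using Dh Xh by simp
  qed
  have R0: "l1 + l2 + l3 = 0" using r_right[of e] u unfolding rr by simp
  have Ry: "l1 * s u1 y + l2 * s u2 y + l3 * s u3 y = 0" using r_left[of y] unfolding rr by simp
  have R1: "- l2 * s u1 u2 - l3 * s u1 u3 = 0" using r_left[of u1] an unfolding rr by simp
  have R2: "l1 * s u1 u2 - l3 * s u2 u3 = 0" using r_left[of u2] an unfolding rr by simp
  have "l3 * D u3 u1 y - l2 * D u1 u2 y = (l1 + l2 + l3) * s u1 y - (l1 * s u1 y + l2 * s u2 y + l3 * s u3 y)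
      + s e y * (- l2 * s u1 u2 - l3 * s u1 u3)"
    unfolding D_def using u an by (simp add: algebra_simps)
  then have "l3 * D u3 u1 y = l2 * D u1 u2 y" using R0 Ry R1 by simp
  then have D31: "D u3 u1 y \<noteq> 0" using l2 D12 by auto
  have "l3 * D u2 u3 y - l1 * D u1 u2 y = (l1 * s u1 y + l2 * s u2 y + l3 * s u3 y) - (l1 + l2 + l3) * s u2 y
      - s e y * (l1 * s u1 u2 - l3 * s u2 u3)"
    unfolding D_def using u an by (simp add: algebra_simps)
  then have "l3 * D u2 u3 y = l1 * D u1 u2 y" using R0 Ry R2 by simp
  then have D23: "D u2 u3 y \<noteq> 0" using l1 D12 by auto
  show ?thesis using that yH ey D12 D23 D31 by blast
qed

end


sublocale geom \<subseteq> ig: igraph "is_object scale s p H" "incident scale s p H"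
  by unfold_locales (auto simp: incident_def)

context geom begin

lemma inc_sub: "Inc U W \<Longrightarrow> dim U < dim W \<Longrightarrow> U \<subseteq> W"
  unfolding incident_def inc_lt_def by auto

lemma line_from_plane:
  assumes "D a b c \<noteq> 0" "a \<in> H" "c \<in> H" "s e a \<noteq> 0" "4 \<le> n"
  shows "Obj (span {a, c})" "dim (span {a, c}) = 2"
proof -
  have ind: "x = 0 \<and> z = 0" if "x *s a + z *s c = t *s r" for x z t
    using indR3[OF assms(1), of x 0 z t] that by simp
  show "Obj (span {a, c})" "dim (span {a, c}) = 2"
    using obj_line[OF assms(2,3,4,5)] ind by blast+
qed

lemma four_cycle:
  assumes p: "ig.path [span {a}, L, span {b}, M, span {a}]"
    and ab: "s e a = 1" "s e b = 1" "a \<in> L" "b \<in> L" "a \<in> M" "b \<in> M"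
    and LM: "dim L = 2" "dim M = 2" "Obj L" "Obj M"
  shows "ig.hom [span {a}, L, span {b}, M, span {a}] [span {a}]"
proof (cases "L = M")
  case True
  have p0: "ig.path ([span {a}] @ [L, span {b}, L] @ [span {a}])" using p True by simp
  note h1 = ig.back_move[OF p0]
  have p1: "ig.path ([] @ [span {a}, L, span {a}] @ [])" using ig.hom_path[OF h1] p True by simp
  note h2 = ig.back_move[OF p1]
  show ?thesis using ig.hom_trans[OF h1[simplified] h2[simplified]] True by simp
next
  case LM': False
  show ?thesis
  proof (cases "span {a} = span {b}")
    case True
    have p0: "ig.path ([] @ [span {a}, L, span {a}] @ [M, span {a}])" using p True by simp
    note h1 = ig.back_move[OF p0]
    have p1: "ig.path ([] @ [span {a}, M, span {a}] @ [])" using ig.hom_path[OF h1] p True by simp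
    note h2 = ig.back_move[OF p1]
    show ?thesis using ig.hom_trans[OF h1[simplified] h2[simplified]] True by simp
  next
    case False
    have d2: "dim (span {a, b}) = 2" by (rule dim2) (use pts_indep[OF ab(1,2) False] in blast)
    have "L = span {a, b}" using line_eq[OF obj_sub[OF LM(3)] LM(1) ab(3,4) d2] .
    moreover have "M = span {a, b}" using line_eq[OF obj_sub[OF LM(4)] LM(2) ab(5,6) d2] .
    ultimately show ?thesis using LM' by simp
  qed
qed

lemma cone_final:
  assumes p: "ig.path [span {u1}, span {u1, u2}, span {u2}, span {u2, u3}, span {u3}, span {u3, u1}, span {u1}]"
    and u: "s e u1 = 1" "s e u2 = 1" "s e u3 = 1"
    and d: "dim (span {u1, u2}) = 2" "dim (span {u2, u3}) = 2" "dim (span {u3, u1}) = 2"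
    and W: "Obj W" "odd (dim W)" "2 < dim W" "span {u1, u2, u3} \<subseteq> W"
  shows "ig.hom [span {u1}, span {u1, u2}, span {u2}, span {u2, u3}, span {u3}, span {u3, u1}, span {u1}] [span {u1}]"
proof -
  have I: "Inc (span {u1}) (span {u1, u2})" "Inc (span {u1, u2}) (span {u2})"
    "Inc (span {u2}) (span {u2, u3})" "Inc (span {u2, u3}) (span {u3})"
    "Inc (span {u3}) (span {u3, u1})" "Inc (span {u3, u1}) (span {u1})"
    using p by (simp_all add: ig.path_long)
  have O: "Obj (span {u1})" "Obj (span {u2})" "Obj (span {u3})"
      "Obj (span {u1, u2})" "Obj (span {u2, u3})" "Obj (span {u3, u1})"
    using ig.I_obj[OF I(1)] ig.I_obj[OF I(3)] ig.I_obj[OF I(5)]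
      ig.I_obj[OF I(2)] ig.I_obj[OF I(4)] ig.I_obj[OF I(6)] by auto
  have dp: "dim (span {u1}) = 1" "dim (span {u2}) = 1" "dim (span {u3}) = 1"
    using u by (auto simp: dim_span)
  have sub: "span {u1} \<subseteq> W" "span {u2} \<subseteq> W" "span {u3} \<subseteq> W"
      "span {u1, u2} \<subseteq> W" "span {u2, u3} \<subseteq> W" "span {u3, u1} \<subseteq> W"
    using subset_trans[OF span_mono W(4)] by auto
  show ?thesis
  proof (rule ig.cone_tri[OF p])
    show "Inc (span {u1}) W" by (rule inc_odd[OF O(1) W(1) sub(1)]) (use dp W in auto)
    show "Inc (span {u2}) W" by (rule inc_odd[OF O(2) W(1) sub(2)]) (use dp W in auto)
    show "Inc (span {u3}) W" by (rule inc_odd[OF O(3) W(1) sub(3)]) (use dp W in auto)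
    show "Inc (span {u1, u2}) W" by (rule inc_odd[OF O(4) W(1) sub(4)]) (use d W in auto)
    show "Inc (span {u2, u3}) W" by (rule inc_odd[OF O(5) W(1) sub(5)]) (use d W in auto)
    show "Inc (span {u3, u1}) W" by (rule inc_odd[OF O(6) W(1) sub(6)]) (use d W in auto)
  qed
qed

lemma apex_final:
  assumes p: "ig.path [span {u1}, span {u1, u2}, span {u2}, span {u2, u3}, span {u3}, span {u3, u1}, span {u1}]"
    and u: "u1 \<in> H" "u2 \<in> H" "u3 \<in> H" "s e u1 = 1" "s e u2 = 1" "s e u3 = 1"
    and d: "dim (span {u1, u2}) = 2" "dim (span {u2, u3}) = 2" "dim (span {u3, u1}) = 2"
    and y: "y \<in> H" "s e y \<noteq> 0"
    and D: "D u1 u2 y \<noteq> 0" "D u2 u3 y \<noteq> 0" "D u3 u1 y \<noteq> 0" and n: "5 \<le> n"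
  shows "ig.hom [span {u1}, span {u1, u2}, span {u2}, span {u2, u3}, span {u3}, span {u3, u1}, span {u1}] [span {u1}]"
proof -
  have I: "Inc (span {u1}) (span {u1, u2})" "Inc (span {u1, u2}) (span {u2})"
    "Inc (span {u2}) (span {u2, u3})" "Inc (span {u2, u3}) (span {u3})"
    "Inc (span {u3}) (span {u3, u1})" "Inc (span {u3, u1}) (span {u1})"
    using p by (simp_all add: ig.path_long)
  have O: "Obj (span {u1})" "Obj (span {u2})" "Obj (span {u3})"
      "Obj (span {u1, u2})" "Obj (span {u2, u3})" "Obj (span {u3, u1})"
    using ig.I_obj[OF I(1)] ig.I_obj[OF I(3)] ig.I_obj[OF I(5)]
      ig.I_obj[OF I(2)] ig.I_obj[OF I(4)] ig.I_obj[OF I(6)] by auto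
  have dp: "dim (span {u1}) = 1" "dim (span {u2}) = 1" "dim (span {u3}) = 1"
    using u by (auto simp: dim_span)
  have n3: "3 \<le> n" "4 \<le> n" using n by auto
  have OQ: "Obj (span {y})" "dim (span {y}) = 1" using obj_point[OF y n3(1)] by auto
  have OM1: "Obj (span {u1, y})" "dim (span {u1, y}) = 2"
    using line_from_plane[OF D(1) u(1) y(1) _ n3(2)] u by auto
  have OM2: "Obj (span {u2, y})" "dim (span {u2, y}) = 2"
    using line_from_plane[OF D(2) u(2) y(1) _ n3(2)] u by auto
  have OM3: "Obj (span {u3, y})" "dim (span {u3, y}) = 2"
    using line_from_plane[OF D(3) u(3) y(1) _ n3(2)] u by auto
  have OW1: "Obj (span {u1, u2, y})" "dim (span {u1, u2, y}) = 3"
    using obj_plane[OF u(1) u(2) y(1) D(1) n] by auto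
  have OW2: "Obj (span {u2, u3, y})" "dim (span {u2, u3, y}) = 3"
    using obj_plane[OF u(2) u(3) y(1) D(2) n] by auto
  have OW3: "Obj (span {u3, u1, y})" "dim (span {u3, u1, y}) = 3"
    using obj_plane[OF u(3) u(1) y(1) D(3) n] by auto
  have io: "Inc (span A) (span B)"
    if "Obj (span A)" "Obj (span B)" "A \<subseteq> B" "dim (span A) < dim (span B)" "dim (span B) = 3" for A B
    using inc_odd[OF that(1,2) span_mono[OF that(3)] that(4)] that(5) by simp
  have ipl: "Inc (span {a}) (span B)"
    if "Obj (span {a})" "Obj (span B)" "dim (span {a}) = 1" "dim (span B) = 2" "a \<in> B" "s e a \<noteq> 0" for a B
    using inc_pt_line[OF that(1,2,3,4) span_base[OF that(5)] that(6)] .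
  show ?thesis
  proof (rule ig.apex_tri[OF p, of "span {u1, u2, y}" "span {y}" "span {u1, y}" "span {u2, y}"
        "span {u2, u3, y}" "span {u3, y}" "span {u3, u1, y}"])
    show "Inc (span {u1}) (span {u1, u2, y})" by (rule io) (use O OW1 dp in auto)
    show "Inc (span {u1, u2}) (span {u1, u2, y})" by (rule io) (use O OW1 d in auto)
    show "Inc (span {u2}) (span {u1, u2, y})" by (rule io) (use O OW1 dp in auto)
    show "Inc (span {y}) (span {u1, u2, y})" by (rule io) (use OQ OW1 in auto)
    show "Inc (span {u1, y}) (span {u1, u2, y})" by (rule io) (use OM1 OW1 in auto)
    show "Inc (span {u2, y}) (span {u1, u2, y})" by (rule io) (use OM2 OW1 in auto)
    show "Inc (span {u2}) (span {u2, u3, y})" by (rule io) (use O OW2 dp in auto)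
    show "Inc (span {u2, u3}) (span {u2, u3, y})" by (rule io) (use O OW2 d in auto)
    show "Inc (span {u3}) (span {u2, u3, y})" by (rule io) (use O OW2 dp in auto)
    show "Inc (span {y}) (span {u2, u3, y})" by (rule io) (use OQ OW2 in auto)
    show "Inc (span {u2, y}) (span {u2, u3, y})" by (rule io) (use OM2 OW2 in auto)
    show "Inc (span {u3, y}) (span {u2, u3, y})" by (rule io) (use OM3 OW2 in auto)
    show "Inc (span {u3}) (span {u3, u1, y})" by (rule io) (use O OW3 dp in auto)
    show "Inc (span {u3, u1}) (span {u3, u1, y})" by (rule io) (use O OW3 d in auto)
    show "Inc (span {u1}) (span {u3, u1, y})" by (rule io) (use O OW3 dp in auto)
    show "Inc (span {y}) (span {u3, u1, y})" by (rule io) (use OQ OW3 in auto)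
    show "Inc (span {u3, y}) (span {u3, u1, y})" by (rule io) (use OM3 OW3 in auto)
    show "Inc (span {u1, y}) (span {u3, u1, y})" by (rule io) (use OM1 OW3 in auto)
    show "Inc (span {u1}) (span {u1, y})" by (rule ipl) (use O OM1 dp u in auto)
    show "Inc (span {u2}) (span {u2, y})" by (rule ipl) (use O OM2 dp u in auto)
    show "Inc (span {u3}) (span {u3, y})" by (rule ipl) (use O OM3 dp u in auto)
    show "Inc (span {y}) (span {u1, y})" by (rule ipl) (use OQ OM1 y in auto)
    show "Inc (span {y}) (span {u2, y})" by (rule ipl) (use OQ OM2 y in auto)
    show "Inc (span {y}) (span {u3, y})" by (rule ipl) (use OQ OM3 y in auto)
  qed
qed

theorem tri_main:
  assumes T: "is_triangle scale s p H \<gamma>"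
  shows "null_homotopic Obj Inc \<gamma>"
proof -
  obtain x1 L1 x2 L2 x3 L3 where g: "\<gamma> = [x1, L1, x2, L2, x3, L3, x1]"
    and dx: "dim x1 = 1" "dim x2 = 1" "dim x3 = 1" and dL: "dim L1 = 2" "dim L2 = 2" "dim L3 = 2"
    and p: "ig.path [x1, L1, x2, L2, x3, L3, x1]"
    using T unfolding is_triangle_def by auto
  have I: "Inc x1 L1" "Inc L1 x2" "Inc x2 L2" "Inc L2 x3" "Inc x3 L3" "Inc L3 x1"
    using p by (simp_all add: ig.path_long)
  have O: "Obj x1" "Obj x2" "Obj x3" "Obj L1" "Obj L2" "Obj L3"
    using ig.I_obj[OF I(1)] ig.I_obj[OF I(3)] ig.I_obj[OF I(5)]
      ig.I_obj[OF I(2)] ig.I_obj[OF I(4)] ig.I_obj[OF I(6)] by auto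
  have "4 \<le> n" using obj_dim[OF O(4)] dL by simp
  then have n5: "5 \<le> n" using odd_n by (cases "n = 4") auto
  obtain u1 where u1: "x1 = span {u1}" "u1 \<in> H" "s e u1 = 1" using pt_gen[OF O(1) dx(1)] by blast
  obtain u2 where u2: "x2 = span {u2}" "u2 \<in> H" "s e u2 = 1" using pt_gen[OF O(2) dx(2)] by blast
  obtain u3 where u3: "x3 = span {u3}" "u3 \<in> H" "s e u3 = 1" using pt_gen[OF O(3) dx(3)] by blast
  have sub: "x1 \<subseteq> L1" "x2 \<subseteq> L1" "x2 \<subseteq> L2" "x3 \<subseteq> L2" "x3 \<subseteq> L3" "x1 \<subseteq> L3"
    using inc_sub[OF I(1)] inc_sub[OF ig.I_sym[OF I(2)]] inc_sub[OF I(3)]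
      inc_sub[OF ig.I_sym[OF I(4)]] inc_sub[OF I(5)] inc_sub[OF ig.I_sym[OF I(6)]] dx dL by auto
  have ux: "u1 \<in> x1" "u2 \<in> x2" "u3 \<in> x3" using u1 u2 u3 by (simp_all add: span_base)
  have uin: "u1 \<in> L1" "u2 \<in> L1" "u2 \<in> L2" "u3 \<in> L2" "u3 \<in> L3" "u1 \<in> L3"
    using sub ux by blast+
  have goal: "ig.hom [x1, L1, x2, L2, x3, L3, x1] [x1]"
  proof -
    consider (c12) "x1 = x2" | (c23) "x1 \<noteq> x2" "x2 = x3" | (c31) "x1 \<noteq> x2" "x2 \<noteq> x3" "x3 = x1"
      | (dist) "x1 \<noteq> x2" "x2 \<noteq> x3" "x3 \<noteq> x1" by blast
    then show ?thesis
    proof cases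
      case c12
      have p0: "ig.path ([] @ [x1, L1, x1] @ [L2, x3, L3, x1])" using p c12 by simp
      note h1 = ig.back_move[OF p0]
      have p1: "ig.path [span {u1}, L2, span {u3}, L3, span {u1}]"
        using ig.hom_path[OF h1 p0] u1 u3 by simp
      have "u1 \<in> L2" using ux(1) sub(3) c12 by blast
      note h2 = four_cycle[OF p1 u1(3) u3(3) this uin(4) uin(6) uin(5) dL(2,3) O(5,6)]
      show ?thesis using ig.hom_trans[OF h1[simplified] h2[folded u1(1) u3(1)]] c12 by simp
    next
      case c23
      have p0: "ig.path ([x1, L1] @ [x2, L2, x2] @ [L3, x1])" using p c23 by simp
      note h1 = ig.back_move[OF p0]
      have p1: "ig.path [span {u1}, L1, span {u2}, L3, span {u1}]"
        using ig.hom_path[OF h1 p0] u1 u2 by simp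
      have "u2 \<in> L3" using ux(2) sub(5) c23 by blast
      note h2 = four_cycle[OF p1 u1(3) u2(3) uin(1) uin(2) uin(6) this dL(1,3) O(4,6)]
      show ?thesis using ig.hom_trans[OF h1[simplified] h2[folded u1(1) u2(1)]] c23 by simp
    next
      case c31
      have p0: "ig.path ([x1, L1, x2, L2] @ [x1, L3, x1] @ [])" using p c31 by simp
      note h1 = ig.back_move[OF p0]
      have p1: "ig.path [span {u1}, L1, span {u2}, L2, span {u1}]"
        using ig.hom_path[OF h1 p0] u1 u2 by simp
      have "u1 \<in> L2" using ux(1) sub(4) c31 by blast
      note h2 = four_cycle[OF p1 u1(3) u2(3) uin(1) uin(2) this uin(3) dL(1,2) O(4,5)]
      show ?thesis using ig.hom_trans[OF h1[simplified] h2[folded u1(1) u2(1)]] c31 by simp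
    next
      case dist
      have ne: "span {u1} \<noteq> span {u2}" "span {u2} \<noteq> span {u3}" "span {u3} \<noteq> span {u1}"
        using dist u1 u2 u3 by auto
      have d12: "dim (span {u1, u2}) = 2" by (rule dim2) (use pts_indep[OF u1(3) u2(3) ne(1)] in blast)
      have d23: "dim (span {u2, u3}) = 2" by (rule dim2) (use pts_indep[OF u2(3) u3(3) ne(2)] in blast)
      have d31: "dim (span {u3, u1}) = 2" by (rule dim2) (use pts_indep[OF u3(3) u1(3) ne(3)] in blast)
      have L1e: "L1 = span {u1, u2}" using line_eq[OF obj_sub[OF O(4)] dL(1) uin(1) uin(2) d12] .
      have L2e: "L2 = span {u2, u3}" using line_eq[OF obj_sub[OF O(5)] dL(2) uin(3) uin(4) d23] .
      have L3e: "L3 = span {u3, u1}" using line_eq[OF obj_sub[OF O(6)] dL(3) uin(5) uin(6) d31] .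
      have pT: "ig.path [span {u1}, span {u1, u2}, span {u2}, span {u2, u3}, span {u3}, span {u3, u1}, span {u1}]"
        using p u1 u2 u3 L1e L2e L3e by simp
      have main: "ig.hom [span {u1}, span {u1, u2}, span {u2}, span {u2, u3}, span {u3}, span {u3, u1}, span {u1}] [span {u1}]"
      proof (cases "\<forall>x y z. x *s u1 + y *s u2 + z *s u3 = 0 \<longrightarrow> x = 0 \<and> y = 0 \<and> z = 0")
        case False
        then obtain x y z where eq: "x *s u1 + y *s u2 + z *s u3 = 0" and nz: "\<not> (x = 0 \<and> y = 0 \<and> z = 0)"
          by blast
        have z0: "z \<noteq> 0"
        proof
          assume "z = 0"
          then have "x *s u1 + y *s u2 = 0" using eq by simp
          then show False using pts_indep[OF u1(3) u2(3) ne(1)] nz \<open>z = 0\<close> by blast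
        qed
        have "z *s u3 = - (x *s u1 + y *s u2)" using add_eq_0_iff[THEN iffD1, OF eq] .
        then have "u3 = inverse z *s (- (x *s u1 + y *s u2))" using z0
          by (metis scale_scale left_inverse scale_one)
        then have u3L: "u3 \<in> span {u1, u2}"
          by (metis span_scale span_neg span_add span_base insertI1 insertI2 singletonI)
        have u3L1: "u3 \<in> L1" using u3L L1e by simp
        have E2: "L1 = span {u2, u3}" using line_eq[OF obj_sub[OF O(4)] dL(1) uin(2) u3L1 d23] .
        have E3: "L1 = span {u3, u1}" using line_eq[OF obj_sub[OF O(4)] dL(1) u3L1 uin(1) d31] .
        have pL: "ig.path [x1, L1, x2, L1, x3, L1, x1]" using p E2 E3 L2e L3e by simp
        have pa: "ig.path ([x1] @ [L1, x2, L1] @ [x3, L1, x1])" using pL by simp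
        note h1 = ig.back_move[OF pa]
        have pb: "ig.path ([x1] @ [L1, x3, L1] @ [x1])" using ig.hom_path[OF h1 pa] by simp
        note h2 = ig.back_move[OF pb]
        have pc: "ig.path ([] @ [x1, L1, x1] @ [])" using ig.hom_path[OF h2 pb] by simp
        note h3 = ig.back_move[OF pc]
        have "ig.hom [x1, L1, x2, L1, x3, L1, x1] [x1]"
          using ig.hom_trans[OF h1[simplified] ig.hom_trans[OF h2[simplified] h3[simplified]]] .
        then show ?thesis using u1 u2 u3 L1e E2 E3 L2e L3e by simp
      next
        case True
        then have ind: "\<And>x y z. x *s u1 + y *s u2 + z *s u3 = 0 \<Longrightarrow> x = 0 \<and> y = 0 \<and> z = 0" by blast
        show ?thesis
        proof (cases "D u1 u2 u3 = 0")
          case False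
          have "Obj (span {u1, u2, u3})" "dim (span {u1, u2, u3}) = 3"
            using obj_plane[OF u1(2) u2(2) u3(2) False n5] by auto
          then show ?thesis using cone_final[OF pT u1(3) u2(3) u3(3) d12 d23 d31] by simp
        next
          case D0: True
          show ?thesis
          proof (cases "r \<in> span {u1, u2, u3}")
            case True
            have r12: "r \<notin> span {u1, u2}" using obj_r[OF O(4)] L1e by simp
            have r23: "r \<notin> span {u2, u3}" using obj_r[OF O(5)] L2e by simp
            have r31: "r \<notin> span {u3, u1}" using obj_r[OF O(6)] L3e by simp
            obtain y where y: "y \<in> H" "s e y \<noteq> 0" "D u1 u2 y \<noteq> 0" "D u2 u3 y \<noteq> 0" "D u3 u1 y \<noteq> 0"
              using apex_case[OF u1(2) u2(2) u3(2) u1(3) u2(3) u3(3) ind True r12 r23 r31] by blast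
            show ?thesis
              using apex_final[OF pT u1(2) u2(2) u3(2) u1(3) u2(3) u3(3) d12 d23 d31 y n5] .
          next
            case False
            obtain W where W: "Obj W" "dim W = 5" "span {u1, u2, u3} \<subseteq> W"
              using W5_case[OF u1(2) u2(2) u3(2) u1(3) u2(3) u3(3) ind False D0] by blast
            show ?thesis using cone_final[OF pT u1(3) u2(3) u3(3) d12 d23 d31 W(1) _ _ W(3)] W(2) by simp
          qed
        qed
      qed
      then show ?thesis using u1 u2 u3 L1e L2e L3e by simp
    qed
  qed
  then show ?thesis unfolding null_homotopic_def g by simp
qed

end


theorem lemma4p5:
  fixes scale :: "'f::field \<Rightarrow> 'v::ab_group_add \<Rightarrow> 'v"
    and s :: "'v \<Rightarrow> 'v \<Rightarrow> 'f"
    and p H :: "'v set"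
    and n :: nat
  assumes vs: "vector_space scale"
    and fin: "\<exists>B. finite B \<and> module.span scale B = UNIV"
    and dimV: "vector_space.dim scale (UNIV::'v set) = n"
    and odd_n: "odd n"
    and form: "alt_bilinear scale s"
    and maxrank: "vector_space.dim scale (Rad s UNIV) \<le> 1"
    and p_sub: "module.subspace scale p"
    and p_dim: "vector_space.dim scale p = 1"
    and p_rad: "p \<inter> Rad s UNIV = {0}"
    and H_sub: "module.subspace scale H"
    and H_cap: "H \<inter> p = {0}"
    and H_sum: "{h + q | h q. h \<in> H \<and> q \<in> p} = UNIV"
    and H_rad: "Rad s UNIV \<subseteq> H"
  shows "\<forall>\<gamma>. is_triangle scale s p H \<gamma> \<longrightarrow>
           null_homotopic (is_object scale s p H) (incident scale s p H) \<gamma>"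
proof (intro allI impI)
  fix \<gamma> assume T: "is_triangle scale s p H \<gamma>"
  interpret vs: vector_space scale by (rule vs)
  obtain B0 where B0: "finite B0" "vs.span B0 = UNIV" using fin by blast
  obtain Bs where Bs: "Bs \<subseteq> B0" "vs.independent Bs" "B0 \<subseteq> vs.span Bs"
    using vs.maximal_independent_subset[of B0] by blast
  have spB: "vs.span Bs = UNIV"
  proof -
    have "vs.span B0 \<subseteq> vs.span Bs" using vs.span_mono[OF Bs(3)] vs.span_span by simp
    then show ?thesis using B0(2) by auto
  qed
  have finB: "finite Bs" using B0(1) Bs(1) finite_subset by blast
  interpret fd: finite_dimensional_vector_space scale Bs
    by unfold_locales (use finB Bs spB in auto)
  obtain B where B: "B \<subseteq> p" "vs.independent B" "p \<subseteq> vs.span B" "card B = vs.dim p"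
    using vs.basis_exists[of p] by blast
  have "card B = 1" using B(4) p_dim by simp
  then obtain e where Be: "B = {e}" by (auto simp: card_1_singleton_iff)
  have e0: "e \<noteq> 0" using B(2) Be vs.dependent_zero by blast
  have pe: "p = vs.span {e}"
  proof -
    have "vs.span {e} \<subseteq> p" using vs.span_minimal[OF _ p_sub] B(1) Be by simp
    then show ?thesis using B(3) Be by auto
  qed
  have eH: "e \<notin> H"
  proof
    assume "e \<in> H"
    moreover have "e \<in> p" using pe vs.span_base by blast
    ultimately show False using H_cap e0 by blast
  qed
  have Hdec: "\<exists>h t. h \<in> H \<and> x = h + scale t e" for x
  proof -
    have "x \<in> {h + q | h q. h \<in> H \<and> q \<in> p}" using H_sum by simp
    then obtain h q where "x = h + q" "h \<in> H" "q \<in> p" by blast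
    moreover obtain t where "q = scale t e" using \<open>q \<in> p\<close> pe by (auto simp: vs.span_singleton)
    ultimately show ?thesis by blast
  qed
  obtain x1 L1 x2 L2 x3 L3 where g: "\<gamma> = [x1, L1, x2, L2, x3, L3, x1]"
    and pth: "is_path (is_object scale s p H) (incident scale s p H) \<gamma>"
    using T unfolding is_triangle_def by auto
  have "is_object scale s p H x1" using pth g unfolding is_path_def by simp
  then have ox: "vs.subspace x1" "\<not> Rad s UNIV \<subseteq> x1" unfolding is_object_def by auto
  then obtain r where r: "r \<in> Rad s UNIV" "r \<notin> x1" by blast
  have r0: "r \<noteq> 0" using r(2) vs.subspace_0[OF ox(1)] by blast
  have rH: "r \<in> H" using r(1) H_rad by blast
  interpret geom scale Bs s p H n e r
  proof unfold_locales
    show "vs.dim UNIV = n" by (rule dimV)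
  qed (use odd_n form pe e0 H_sub eH Hdec maxrank r r0 rH in auto)
  show "null_homotopic (is_object scale s p H) (incident scale s p H) \<gamma>"
    by (rule tri_main[OF T])
qed


end
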